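(* Let $K$ be a field and $m,n,r$ positive integers. Let $R=K[x_{ij}^k \mid 1\le i\le m,\ 1\le j\le n,\ 1\le k\le r]$ and let $I_{mn}^r$ be the ideal generated by all $2$-minors of the horizontal and of the vertical concatenation of the $m\times n$ matrices $X_k=(x_{ij}^k)$, $k=1,\dots,r$. Let $P_{mnr}$ be the poset which is the disjoint union of three pairwise incomparable chains of cardinalities $m-1$, $n-1$, $r-1$, with a natural labeling $P_{mnr}=\{p_1,\dots,p_{N}\}$, $N=m+n+r-3$ (i.e. $p_i\prec p_j$ implies $i<j$). Then the $h$-polynomial of $R/I_{mn}^r$ equals $\sum_{w\in\mathcal L(P_{mnr})}t^{\operatorname{des}(w)}$.
   Context: $\mathcal L(P)$ is the set of linear extensions of $P$, i.e. bijections $w:P\to\{1,\dots,|P|\}$ with $p\preceq q\Rightarrow w(p)\le w(q)$. A descent of $w$ is an index $i$ such that $w(p_j)=i$ and $w(p_k)=i+1$ with $j>k$; $\operatorname{des}(w)$ is the number of descents. The $h$-polynomial of a standard graded algebra $A$ is the numerator of its Hilbert series written in reduced form $h(t)/(1-t)^{\dim A}$. *)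

theory Defs
  imports Main "HOL-Library.Poly_Mapping" "HOL-Computational_Algebra.Polynomial_FPS"
begin

text \<open>Variables are indexed by triples (i,j,k), standing for x_{ij}^k.\<close>

type_synonym 'a mpoly3 = "((nat \<times> nat \<times> nat) \<Rightarrow>\<^sub>0 nat) \<Rightarrow>\<^sub>0 'a"

definition var3 :: "nat \<Rightarrow> nat \<Rightarrow> nat \<Rightarrow> 'a::field mpoly3" where
  "var3 i j k = Poly_Mapping.single (Poly_Mapping.single (i, j, k) 1) 1"

definition cscale :: "'a::field \<Rightarrow> 'a mpoly3 \<Rightarrow> 'a mpoly3" where
  "cscale c p = Poly_Mapping.single 0 c * p"

definition vars3 :: "nat \<Rightarrow> nat \<Rightarrow> nat \<Rightarrow> (nat \<times> nat \<times> nat) set" where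
  "vars3 m n r = {(i, j, k). 1 \<le> i \<and> i \<le> m \<and> 1 \<le> j \<and> j \<le> n \<and> 1 \<le> k \<and> k \<le> r}"

definition ringR :: "nat \<Rightarrow> nat \<Rightarrow> nat \<Rightarrow> 'a::field mpoly3 set" where
  "ringR m n r = {p. \<forall>a \<in> Poly_Mapping.keys p. Poly_Mapping.keys a \<subseteq> vars3 m n r}"

definition homog :: "nat \<Rightarrow> nat \<Rightarrow> nat \<Rightarrow> nat \<Rightarrow> 'a::field mpoly3 set" where
  "homog m n r d = {p \<in> ringR m n r. \<forall>a \<in> Poly_Mapping.keys p. (\<Sum>v\<in>Poly_Mapping.keys a. Poly_Mapping.lookup a v) = d}"

definition ideal_gen :: "nat \<Rightarrow> nat \<Rightarrow> nat \<Rightarrow> 'a::field mpoly3 set \<Rightarrow> 'a mpoly3 set" where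
  "ideal_gen m n r G = {(\<Sum>g\<in>F. c g * g) | F c. finite F \<and> F \<subseteq> G \<and> (\<forall>g\<in>F. c g \<in> ringR m n r)}"

text \<open>Horizontal concatenation [X_1 | ... | X_r]: an m x (nr) matrix whose column (k,j)
  in row i is x_{ij}^k. Vertical concatenation: an (mr) x n matrix whose row (k,i)
  in column j is x_{ij}^k. A 2-minor uses two distinct rows and two distinct columns.\<close>
definition hminors :: "nat \<Rightarrow> nat \<Rightarrow> nat \<Rightarrow> 'a::field mpoly3 set" where
  "hminors m n r = {var3 i j k * var3 i' j' k' - var3 i j' k' * var3 i' j k | i i' j j' k k'.
     1 \<le> i \<and> i < i' \<and> i' \<le> m \<and> 1 \<le> j \<and> j \<le> n \<and> 1 \<le> j' \<and> j' \<le> n \<and>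
     1 \<le> k \<and> k \<le> r \<and> 1 \<le> k' \<and> k' \<le> r \<and> (k < k' \<or> (k = k' \<and> j < j'))}"

definition vminors :: "nat \<Rightarrow> nat \<Rightarrow> nat \<Rightarrow> 'a::field mpoly3 set" where
  "vminors m n r = {var3 i j k * var3 i' j' k' - var3 i j' k * var3 i' j k' | i i' j j' k k'.
     1 \<le> i \<and> i \<le> m \<and> 1 \<le> i' \<and> i' \<le> m \<and> 1 \<le> j \<and> j < j' \<and> j' \<le> n \<and>
     1 \<le> k \<and> k \<le> r \<and> 1 \<le> k' \<and> k' \<le> r \<and> (k < k' \<or> (k = k' \<and> i < i'))}"

definition Imnr :: "nat \<Rightarrow> nat \<Rightarrow> nat \<Rightarrow> 'a::field mpoly3 set" where
  "Imnr m n r = ideal_gen m n r (hminors m n r \<union> vminors m n r)"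

definition hilb_fun :: "'a::field itself \<Rightarrow> nat \<Rightarrow> nat \<Rightarrow> nat \<Rightarrow> nat \<Rightarrow> nat" where
  "hilb_fun (TYPE('a)) m n r d =
     vector_space.dim (cscale :: 'a \<Rightarrow> 'a mpoly3 \<Rightarrow> 'a mpoly3) (homog m n r d)
     - vector_space.dim (cscale :: 'a \<Rightarrow> 'a mpoly3 \<Rightarrow> 'a mpoly3) (Imnr m n r \<inter> homog m n r d)"

definition hilb_series :: "'a::field itself \<Rightarrow> nat \<Rightarrow> nat \<Rightarrow> nat \<Rightarrow> int fps" where
  "hilb_series T m n r = Abs_fps (\<lambda>d. int (hilb_fun T m n r d))"

text \<open>Model of the poset: disjoint union of three chains of sizes m-1, n-1, r-1,
  elements (c, t) with c the chain and t < size of chain c.\<close>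
definition chain_sizes :: "nat \<Rightarrow> nat \<Rightarrow> nat \<Rightarrow> nat \<Rightarrow> nat" where
  "chain_sizes m n r c = (if c = 0 then m - 1 else if c = 1 then n - 1 else r - 1)"

definition chains_carrier :: "nat \<Rightarrow> nat \<Rightarrow> nat \<Rightarrow> (nat \<times> nat) set" where
  "chains_carrier m n r = {(c, t). c < 3 \<and> t < chain_sizes m n r c}"

definition chains_le :: "nat \<times> nat \<Rightarrow> nat \<times> nat \<Rightarrow> bool" where
  "chains_le x y \<longleftrightarrow> fst x = fst y \<and> snd x \<le> snd y"

definition natural_labeling :: "nat \<Rightarrow> nat \<Rightarrow> nat \<Rightarrow> (nat \<Rightarrow> nat \<times> nat) \<Rightarrow> bool" where
  "natural_labeling m n r \<phi> \<longleftrightarrow>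
     bij_betw \<phi> {1..m + n + r - 3} (chains_carrier m n r) \<and>
     (\<forall>i\<in>{1..m + n + r - 3}. \<forall>j\<in>{1..m + n + r - 3}. chains_le (\<phi> i) (\<phi> j) \<longrightarrow> i \<le> j)"

text \<open>Linear extensions, with elements identified with their labels 1..N:
  bijections w from {1..N} to {1..N} with p_i below p_j implying w i \<le> w j.\<close>
definition lin_ext :: "nat \<Rightarrow> nat \<Rightarrow> nat \<Rightarrow> (nat \<Rightarrow> nat \<times> nat) \<Rightarrow> (nat \<Rightarrow> nat) set" where
  "lin_ext m n r \<phi> = {w. bij_betw w {1..m + n + r - 3} {1..m + n + r - 3} \<and>
     (\<forall>i. i \<notin> {1..m + n + r - 3} \<longrightarrow> w i = 0) \<and>
     (\<forall>i\<in>{1..m + n + r - 3}. \<forall>j\<in>{1..m + n + r - 3}. chains_le (\<phi> i) (\<phi> j) \<longrightarrow> w i \<le> w j)}"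

definition des :: "nat \<Rightarrow> (nat \<Rightarrow> nat) \<Rightarrow> nat" where
  "des N w = card {i. \<exists>j k. j \<in> {1..N} \<and> k \<in> {1..N} \<and> w j = i \<and> w k = i + 1 \<and> j > k}"

end

theory Submission
  imports Defs "HOL-Library.Multiset"
begin

lemma card_sorted_lists:
  "card {xs::nat list. sorted xs \<and> length xs = L \<and> set xs \<subseteq> {..e}} = (e + L) choose L"
proof -
  have "bij_betw mset {xs::nat list. sorted xs \<and> length xs = L \<and> set xs \<subseteq> {..e}}
          (multisets_of_size {..e} L)"
  proof (rule bij_betw_byWitness[where f' = sorted_list_of_multiset])
    show "\<forall>a\<in>{xs. sorted xs \<and> length xs = L \<and> set xs \<subseteq> {..e}}.
       sorted_list_of_multiset (mset a) = a"
      by (simp add: sorted_list_of_multiset_mset sorted_sort_id)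
    show "\<forall>a'\<in>multisets_of_size {..e} L. mset (sorted_list_of_multiset a') = a'"
      by (simp add: mset_sorted_list_of_multiset)
    show "mset ` {xs. sorted xs \<and> length xs = L \<and> set xs \<subseteq> {..e}} \<subseteq> multisets_of_size {..e} L"
      by (auto simp: multisets_of_size_def)
    show "sorted_list_of_multiset ` multisets_of_size {..e} L
        \<subseteq> {xs. sorted xs \<and> length xs = L \<and> set xs \<subseteq> {..e}}"
    proof clarify
      fix M assume M: "M \<in> multisets_of_size {..e} L"
      have "length (sorted_list_of_multiset M) = size (mset (sorted_list_of_multiset M))"
        by (metis size_mset)
      then show "sorted (sorted_list_of_multiset M) \<and> length (sorted_list_of_multiset M) = L \<and>
           set (sorted_list_of_multiset M) \<subseteq> {..e}"
        using M by (simp add: multisets_of_size_def mset_sorted_list_of_multiset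
              set_sorted_list_of_multiset sorted_sorted_list_of_multiset)
    qed
  qed
  then have "card {xs::nat list. sorted xs \<and> length xs = L \<and> set xs \<subseteq> {..e}} =
      card (multisets_of_size {..e} L)" by (rule bij_betw_same_card)
  also have "\<dots> = (e + L) choose L"
    by (simp add: card_multisets_of_size)
  finally show ?thesis .
qed

definition seqs :: "nat \<Rightarrow> nat \<Rightarrow> nat set \<Rightarrow> (nat \<Rightarrow> nat) set" where
  "seqs N d D = {g. (\<forall>s. s \<notin> {1..N} \<longrightarrow> g s = 0) \<and> (\<forall>s\<in>{1..N}. g s \<le> d) \<and>
      (\<forall>s. 1 \<le> s \<and> s < N \<longrightarrow> g s \<le> g (Suc s)) \<and> (\<forall>s\<in>D. g s < g (Suc s))}"

lemma step_mono:
  assumes "\<forall>s. 1 \<le> s \<and> s < N \<longrightarrow> (g::nat\<Rightarrow>nat) s \<le> g (Suc s)" "1 \<le> s" "s \<le> t" "t \<le> N"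
  shows "g s \<le> g t"
  using assms(3,4)
proof (induction t)
  case 0 then show ?case using assms(2) by simp
next
  case (Suc t)
  show ?case
  proof (cases "s = Suc t")
    case True then show ?thesis by simp
  next
    case False
    then have "s \<le> t" using Suc.prems by simp
    then have "g s \<le> g t" using Suc by simp
    also have "g t \<le> g (Suc t)" using assms(1,2) \<open>s \<le> t\<close> Suc.prems by simp
    finally show ?thesis .
  qed
qed

lemma card_seqs_empty: "card (seqs N e {}) = (e + N) choose N"
proof -
  have "bij_betw (\<lambda>g. map g [1..<Suc N]) (seqs N e {})
          {xs::nat list. sorted xs \<and> length xs = N \<and> set xs \<subseteq> {..e}}"
  proof (rule bij_betw_byWitness[where f' = "\<lambda>xs s. if s \<in> {1..N} then xs ! (s - 1) else 0"])
    show "\<forall>a\<in>seqs N e {}. (\<lambda>s. if s \<in> {1..N} then map a [1..<Suc N] ! (s - 1) else 0) = a"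
      unfolding seqs_def
    proof (clarify, rule ext)
      fix g :: "nat \<Rightarrow> nat" and s
      assume "\<forall>s. s \<notin> {1..N} \<longrightarrow> g s = 0"
      then show "(if s \<in> {1..N} then map g [1..<Suc N] ! (s - 1) else 0) = g s"
      proof (cases "s \<in> {1..N}")
        case True
        then have "s - 1 < Suc N - 1" by auto
        from nth_map_upt[OF this] True show ?thesis by (simp del: upt_Suc)
      qed auto
    qed
    show "\<forall>a'\<in>{xs. sorted xs \<and> length xs = N \<and> set xs \<subseteq> {..e}}.
       map (\<lambda>s. if s \<in> {1..N} then a' ! (s - 1) else 0) [1..<Suc N] = a'"
    proof (intro ballI nth_equalityI)
      fix xs :: "nat list" assume "xs \<in> {xs. sorted xs \<and> length xs = N \<and> set xs \<subseteq> {..e}}"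
      then have l: "length xs = N" by simp
      then show "length (map (\<lambda>s. if s \<in> {1..N} then xs ! (s - 1) else 0) [1..<Suc N]) = length xs"
        by simp
      fix i assume "i < length (map (\<lambda>s. if s \<in> {1..N} then xs ! (s - 1) else 0) [1..<Suc N])"
      then have i: "i < Suc N - 1" by (simp del: upt_Suc)
      show "map (\<lambda>s. if s \<in> {1..N} then xs ! (s - 1) else 0) [1..<Suc N] ! i = xs ! i"
        using nth_map_upt[OF i] i by (simp del: upt_Suc)
    qed
    show "(\<lambda>g. map g [1..<Suc N]) ` seqs N e {} \<subseteq> {xs. sorted xs \<and> length xs = N \<and> set xs \<subseteq> {..e}}"
    proof clarify
      fix g assume g: "g \<in> seqs N e {}"
      have "sorted (map g [1..<Suc N])"
        unfolding sorted_iff_nth_mono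
      proof (intro allI impI)
        fix i j assume "i \<le> j" "j < length (map g [1..<Suc N])"
        then show "map g [1..<Suc N] ! i \<le> map g [1..<Suc N] ! j"
        proof -
          have ij: "i < Suc N - 1" "j < Suc N - 1" using \<open>i \<le> j\<close> \<open>j < length (map g [1..<Suc N])\<close> by (auto simp del: upt_Suc)
          have "g (Suc i) \<le> g (Suc j)"
            using step_mono[of N g "Suc i" "Suc j"] g ij \<open>i \<le> j\<close> by (simp add: seqs_def)
          then show ?thesis using nth_map_upt[OF ij(1), of g] nth_map_upt[OF ij(2), of g] by (simp del: upt_Suc)
        qed
      qed
      then show "sorted (map g [1..<Suc N]) \<and> length (map g [1..<Suc N]) = N \<and> set (map g [1..<Suc N]) \<subseteq> {..e}"
        using g by (auto simp: seqs_def simp del: upt_Suc)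
    qed
    show "(\<lambda>xs s. if s \<in> {1..N} then xs ! (s - 1) else 0) ` {xs. sorted xs \<and> length xs = N \<and> set xs \<subseteq> {..e}}
        \<subseteq> seqs N e {}"
    proof (rule image_subsetI)
      fix xs :: "nat list" assume "xs \<in> {xs. sorted xs \<and> length xs = N \<and> set xs \<subseteq> {..e}}"
      then have xs: "sorted xs" "length xs = N" "set xs \<subseteq> {..e}" by auto
      show "(\<lambda>s. if s \<in> {1..N} then xs ! (s - 1) else 0) \<in> seqs N e {}"
        unfolding seqs_def
      proof (intro CollectI conjI allI ballI impI)
        fix s assume "s \<in> {1..N}"
        then have "xs ! (s - 1) \<in> set xs" using xs by auto
        then show "(if s \<in> {1..N} then xs ! (s - 1) else 0) \<le> e" using xs by auto
      next
        fix s assume "1 \<le> s \<and> s < N"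
        then show "(if s \<in> {1..N} then xs ! (s - 1) else 0) \<le> (if Suc s \<in> {1..N} then xs ! (Suc s - 1) else 0)"
          using xs(1,2) by (simp add: sorted_iff_nth_mono)
      qed auto
    qed
  qed
  then have "card (seqs N e {}) = card {xs::nat list. sorted xs \<and> length xs = N \<and> set xs \<subseteq> {..e}}"
    by (rule bij_betw_same_card)
  then show ?thesis using card_sorted_lists[of N e] by simp
qed

definition cnt :: "nat set \<Rightarrow> nat \<Rightarrow> nat" where
  "cnt D u = card (D \<inter> {1..<u})"

lemma cnt_Suc: "cnt D (Suc u) = cnt D u + (if u \<in> D \<and> 1 \<le> u then 1 else 0)"
proof -
  have "D \<inter> {1..<Suc u} = (D \<inter> {1..<u}) \<union> (if u \<in> D \<and> 1 \<le> u then {u} else {})"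
    by (auto simp: less_Suc_eq)
  then show ?thesis unfolding cnt_def by auto
qed

lemma cnt_mono: "u \<le> v \<Longrightarrow> cnt D u \<le> cnt D v"
  unfolding cnt_def by (intro card_mono) auto

lemma cnt_N: "D \<subseteq> {1..<N} \<Longrightarrow> cnt D N = card D"
  unfolding cnt_def by (simp add: Int_absorb2)

lemma seqs_lower:
  assumes "g \<in> seqs N d D" "u \<in> {1..N}"
  shows "cnt D u \<le> g u"
  using assms(2)
proof (induction u)
  case 0 then show ?case by simp
next
  case (Suc u)
  show ?case
  proof (cases "u = 0")
    case True then show ?thesis by (simp add: cnt_def)
  next
    case False
    then have "u \<in> {1..N}" "1 \<le> u \<and> u < N" using Suc.prems by auto
    then have "cnt D u \<le> g u" "g u \<le> g (Suc u)" "u \<in> D \<Longrightarrow> g u < g (Suc u)"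
      using Suc.IH assms(1) unfolding seqs_def by auto
    then show ?thesis using False by (auto simp: cnt_Suc)
  qed
qed

lemma card_seqs:
  assumes D: "D \<subseteq> {1..<N}"
  shows "card (seqs N d D) = (d + N - card D) choose N"
proof (cases "card D \<le> d")
  case False
  have "seqs N d D = {}"
  proof (rule ccontr)
    assume "seqs N d D \<noteq> {}"
    then obtain g where g: "g \<in> seqs N d D" by auto
    have "N \<ge> 1" using False D by (cases N) auto
    then have "cnt D N \<le> g N" "g N \<le> d" using seqs_lower[OF g, of N] g by (auto simp: seqs_def)
    then show False using cnt_N[OF D] False by simp
  qed
  moreover have "card D \<le> card {1..<N}" using D by (intro card_mono) auto
  then have "d + N - card D < N" using False by simp
  ultimately show ?thesis by simp
next
  case True
  let ?k = "card D"
  have "bij_betw (\<lambda>g s. g s - cnt D s) (seqs N d D) (seqs N (d - ?k) {})"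
  proof (rule bij_betw_byWitness[where f' = "\<lambda>h s. if s \<in> {1..N} then h s + cnt D s else 0"])
    show "\<forall>a\<in>seqs N d D. (\<lambda>s. if s \<in> {1..N} then a s - cnt D s + cnt D s else 0) = a"
    proof (intro ballI ext)
      fix g s assume g: "g \<in> seqs N d D"
      show "(if s \<in> {1..N} then g s - cnt D s + cnt D s else 0) = g s"
        using seqs_lower[OF g, of s] g by (auto simp: seqs_def)
    qed
    show "\<forall>a'\<in>seqs N (d - ?k) {}. (\<lambda>s. (if s \<in> {1..N} then a' s + cnt D s else 0) - cnt D s) = a'"
      by (auto simp: seqs_def)
    show "(\<lambda>g s. g s - cnt D s) ` seqs N d D \<subseteq> seqs N (d - ?k) {}"
    proof clarify
      fix g assume g: "g \<in> seqs N d D"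
      have st: "\<forall>s. 1 \<le> s \<and> s < N \<longrightarrow> g s - cnt D s \<le> g (Suc s) - cnt D (Suc s)"
      proof (intro allI impI)
        fix s assume s: "1 \<le> s \<and> s < N"
        then have "cnt D s \<le> g s" "g s \<le> g (Suc s)" "s \<in> D \<Longrightarrow> g s < g (Suc s)"
          using seqs_lower[OF g, of s] g unfolding seqs_def by auto
        then show "g s - cnt D s \<le> g (Suc s) - cnt D (Suc s)"
          by (auto simp: cnt_Suc)
      qed
      have "\<forall>s\<in>{1..N}. g s - cnt D s \<le> d - ?k"
      proof
        fix s assume s: "s \<in> {1..N}"
        have "g s - cnt D s \<le> g N - cnt D N"
          using step_mono[OF st, of s N] s by auto
        also have "g N \<le> d" using g s by (auto simp: seqs_def)
        then have "g N - cnt D N \<le> d - ?k" by (simp add: cnt_N[OF D] diff_le_mono)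
        finally show "g s - cnt D s \<le> d - ?k" .
      qed
      then show "(\<lambda>s. g s - cnt D s) \<in> seqs N (d - ?k) {}"
        using st g by (auto simp: seqs_def)
    qed
    show "(\<lambda>h s. if s \<in> {1..N} then h s + cnt D s else 0) ` seqs N (d - ?k) {} \<subseteq> seqs N d D"
    proof clarify
      fix h assume h: "h \<in> seqs N (d - ?k) {}"
      have hst: "\<forall>s. 1 \<le> s \<and> s < N \<longrightarrow> h s \<le> h (Suc s)" using h by (simp add: seqs_def)
      have b: "h s + cnt D s \<le> d" if "s \<in> {1..N}" for s
      proof -
        have "h s \<le> h N" using step_mono[OF hst, of s N] that by auto
        moreover have "h N \<le> d - ?k" using h that by (auto simp: seqs_def)
        moreover have "cnt D s \<le> ?k" using cnt_mono[of s N D] that cnt_N[OF D] by auto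
        ultimately show ?thesis using True by linarith
      qed
      show "(\<lambda>s. if s \<in> {1..N} then h s + cnt D s else 0) \<in> seqs N d D"
        unfolding seqs_def
      proof (intro CollectI conjI allI ballI impI)
        fix s assume "s \<in> D"
        then have "1 \<le> s" "s < N" using D by auto
        then show "(if s \<in> {1..N} then h s + cnt D s else 0) < (if Suc s \<in> {1..N} then h (Suc s) + cnt D (Suc s) else 0)"
        proof -
          have "h s \<le> h (Suc s)" using hst \<open>1 \<le> s\<close> \<open>s < N\<close> by simp
          then show ?thesis using \<open>1 \<le> s\<close> \<open>s < N\<close> \<open>s \<in> D\<close> by (simp add: cnt_Suc)
        qed
      next
        fix s assume "1 \<le> s \<and> s < N"
        then show "(if s \<in> {1..N} then h s + cnt D s else 0) \<le> (if Suc s \<in> {1..N} then h (Suc s) + cnt D (Suc s) else 0)"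
        proof -
          have "h s \<le> h (Suc s)" using hst \<open>1 \<le> s \<and> s < N\<close> by simp
          then show ?thesis using \<open>1 \<le> s \<and> s < N\<close> by (simp add: cnt_Suc)
        qed
      next
        fix s assume "s \<in> {1..N}"
        then show "(if s \<in> {1..N} then h s + cnt D s else 0) \<le> d" using b by simp
      next
        fix s assume "s \<notin> {1..N}"
        then show "(if s \<in> {1..N} then h s + cnt D s else 0) = 0" by (simp only: if_False)
      qed
    qed
  qed
  then have "card (seqs N d D) = card (seqs N (d - ?k) {})" by (rule bij_betw_same_card)
  also have "\<dots> = (d - ?k + N) choose N" by (rule card_seqs_empty)
  also have "d - ?k + N = d + N - ?k" using True by simp
  finally show ?thesis .
qed


definition rank :: "nat \<Rightarrow> (nat \<Rightarrow> nat) \<Rightarrow> nat \<Rightarrow> nat" where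
  "rank N \<kappa> i = (if i \<in> {1..N} then card {j\<in>{1..N}. \<kappa> j < \<kappa> i} + 1 else 0)"

lemma rank_less:
  assumes "i \<in> {1..N}" "j \<in> {1..N}" "\<kappa> i < \<kappa> j"
  shows "rank N \<kappa> i < rank N \<kappa> j"
proof -
  have "{j'\<in>{1..N}. \<kappa> j' < \<kappa> i} \<subset> {j'\<in>{1..N}. \<kappa> j' < \<kappa> j}"
    using assms by auto
  then have "card {j'\<in>{1..N}. \<kappa> j' < \<kappa> i} < card {j'\<in>{1..N}. \<kappa> j' < \<kappa> j}"
    by (intro psubset_card_mono) auto
  then show ?thesis using assms by (simp add: rank_def)
qed

lemma rank_bij:
  assumes inj: "inj_on \<kappa> {1..N}"
  shows "bij_betw (rank N \<kappa>) {1..N} {1..N}"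
proof -
  have sub: "rank N \<kappa> ` {1..N} \<subseteq> {1..N}"
  proof
    fix x assume "x \<in> rank N \<kappa> ` {1..N}"
    then obtain i where i: "i \<in> {1..N}" "x = rank N \<kappa> i" by auto
    have "{j\<in>{1..N}. \<kappa> j < \<kappa> i} \<subseteq> {1..N} - {i}" by auto
    then have "card {j\<in>{1..N}. \<kappa> j < \<kappa> i} \<le> card ({1..N} - {i})" by (intro card_mono) auto
    also have "\<dots> = N - 1" using i by simp
    finally show "x \<in> {1..N}" using i by (auto simp: rank_def)
  qed
  have injr: "inj_on (rank N \<kappa>) {1..N}"
  proof (rule inj_onI)
    fix i j assume ij: "i \<in> {1..N}" "j \<in> {1..N}" "rank N \<kappa> i = rank N \<kappa> j"
    show "i = j"
    proof (rule ccontr)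
      assume "i \<noteq> j"
      then have "\<kappa> i \<noteq> \<kappa> j" using inj ij inj_on_def by metis
      then have "\<kappa> i < \<kappa> j \<or> \<kappa> j < \<kappa> i" by arith
      then show False using rank_less[of i N j \<kappa>] rank_less[of j N i \<kappa>] ij by auto
    qed
  qed
  have "rank N \<kappa> ` {1..N} = {1..N}"
    using endo_inj_surj[OF _ sub injr] by simp
  then show ?thesis using injr by (simp add: bij_betw_def)
qed

lemma rank_less_iff:
  assumes inj: "inj_on \<kappa> {1..N}" and "i \<in> {1..N}" "j \<in> {1..N}"
  shows "rank N \<kappa> i < rank N \<kappa> j \<longleftrightarrow> \<kappa> i < \<kappa> j"
proof
  assume r: "rank N \<kappa> i < rank N \<kappa> j"
  show "\<kappa> i < \<kappa> j"
  proof (rule ccontr)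
    assume "\<not> \<kappa> i < \<kappa> j"
    then have "\<kappa> j < \<kappa> i \<or> \<kappa> j = \<kappa> i" by arith
    then show False
    proof
      assume "\<kappa> j < \<kappa> i" then show False using rank_less[of j N i \<kappa>] assms r by auto
    next
      assume "\<kappa> j = \<kappa> i" then have "i = j" using inj assms inj_on_def by metis
      then show False using r by simp
    qed
  qed
qed (use rank_less assms in auto)

lemma key_less:
  fixes x y a b N :: nat
  assumes "a \<le> N" "b \<le> N" "x * Suc N + a < y * Suc N + b"
  shows "x \<le> y \<and> (x = y \<longrightarrow> a < b)"
proof (rule ccontr)
  assume "\<not> (x \<le> y \<and> (x = y \<longrightarrow> a < b))"
  then have "y < x \<or> (x = y \<and> b \<le> a)" by auto
  then show False
  proof
    assume "y < x"
    then have "Suc y * Suc N \<le> x * Suc N" by (intro mult_le_mono1) simp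
    then show False using assms by simp
  qed (use assms in simp)
qed

lemma key_lessI:
  fixes x y a b N :: nat
  assumes "a \<le> N" "x < y \<or> (x = y \<and> a < b)"
  shows "x * Suc N + a < y * Suc N + b"
  using assms(2)
proof
  assume "x < y"
  then have "Suc x * Suc N \<le> y * Suc N" by (intro mult_le_mono1) simp
  then show ?thesis using assms(1) by simp
qed simp

definition LE :: "nat \<Rightarrow> (nat \<Rightarrow> nat \<Rightarrow> bool) \<Rightarrow> (nat \<Rightarrow> nat) set" where
  "LE N le = {w. bij_betw w {1..N} {1..N} \<and> (\<forall>i. i \<notin> {1..N} \<longrightarrow> w i = 0) \<and>
     (\<forall>i\<in>{1..N}. \<forall>j\<in>{1..N}. le i j \<longrightarrow> w i \<le> w j)}"

definition OP :: "nat \<Rightarrow> (nat \<Rightarrow> nat \<Rightarrow> bool) \<Rightarrow> nat \<Rightarrow> (nat \<Rightarrow> nat) set" where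
  "OP N le d = {f. (\<forall>i. i \<notin> {1..N} \<longrightarrow> f i = 0) \<and> (\<forall>i\<in>{1..N}. f i \<le> d) \<and>
     (\<forall>i\<in>{1..N}. \<forall>j\<in>{1..N}. le i j \<longrightarrow> f i \<le> f j)}"

definition DesSet :: "nat \<Rightarrow> (nat \<Rightarrow> nat) \<Rightarrow> nat set" where
  "DesSet N w = {i. \<exists>j k. j \<in> {1..N} \<and> k \<in> {1..N} \<and> w j = i \<and> w k = i + 1 \<and> j > k}"

lemma des_eq: "des N w = card (DesSet N w)"
  by (simp add: des_def DesSet_def)

lemma DesSet_sub: "w \<in> LE N le \<Longrightarrow> DesSet N w \<subseteq> {1..<N}"
proof
  fix i assume w: "w \<in> LE N le" and "i \<in> DesSet N w"
  then obtain j k where "j \<in> {1..N}" "k \<in> {1..N}" "w j = i" "w k = i + 1"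
    unfolding DesSet_def by auto
  moreover have "w ` {1..N} = {1..N}" using w by (simp add: LE_def bij_betw_def)
  ultimately have "i \<in> {1..N}" "i + 1 \<in> {1..N}" by (metis imageI)+
  then show "i \<in> {1..<N}" by auto
qed

definition key :: "nat \<Rightarrow> (nat \<Rightarrow> nat) \<Rightarrow> nat \<Rightarrow> nat" where
  "key N f i = f i * Suc N + i"

definition wfn :: "nat \<Rightarrow> (nat \<Rightarrow> nat) \<Rightarrow> nat \<Rightarrow> nat" where
  "wfn N f = rank N (key N f)"

definition gf :: "nat \<Rightarrow> (nat \<Rightarrow> nat) \<Rightarrow> nat \<Rightarrow> nat" where
  "gf N f s = (if s \<in> {1..N} then f (inv_into {1..N} (wfn N f) s) else 0)"

lemma key_inj: "inj_on (key N f) {1..N}"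
proof (rule inj_onI)
  fix i j assume "i \<in> {1..N}" "j \<in> {1..N}" "key N f i = key N f j"
  then have ij: "i \<le> N" "j \<le> N" "f i * Suc N + i = f j * Suc N + j" by (auto simp: key_def)
  show "i = j"
  proof (rule ccontr)
    assume "i \<noteq> j"
    then have "(f i < f j \<or> (f i = f j \<and> i < j)) \<or> (f j < f i \<or> (f j = f i \<and> j < i))" by arith
    then show False using key_lessI[of i N "f i" "f j" j] key_lessI[of j N "f j" "f i" i] ij by auto
  qed
qed


lemma key_le_conv:
  assumes "i \<in> {1..N}" "j \<in> {1..N}" "key N f i < key N f j"
  shows "f i \<le> f j \<and> (f i = f j \<longrightarrow> i < j)"
  using key_less[of i N j "f i" "f j"] assms by (auto simp: key_def)

lemma T1:
  assumes f: "f \<in> OP N le d" and nat: "\<forall>i\<in>{1..N}. \<forall>j\<in>{1..N}. le i j \<longrightarrow> i \<le> j"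
  shows "wfn N f \<in> LE N le" "gf N f \<in> seqs N d (DesSet N (wfn N f))"
        "(\<lambda>i. gf N f (wfn N f i)) = f"
proof -
  let ?S = "{1..N}"
  let ?w = "wfn N f"
  let ?inv = "inv_into ?S ?w"
  have bij: "bij_betw ?w ?S ?S" unfolding wfn_def by (rule rank_bij[OF key_inj])
  have iff: "i \<in> ?S \<Longrightarrow> j \<in> ?S \<Longrightarrow> ?w i < ?w j \<longleftrightarrow> key N f i < key N f j" for i j
    unfolding wfn_def by (rule rank_less_iff[OF key_inj])
  have out: "i \<notin> ?S \<Longrightarrow> ?w i = 0" for i by (simp add: wfn_def rank_def)
  have invS: "s \<in> ?S \<Longrightarrow> ?inv s \<in> ?S" for s using bij by (metis bij_betw_def inv_into_into)
  have winv: "s \<in> ?S \<Longrightarrow> ?w (?inv s) = s" for s using bij_betw_inv_into_right[OF bij] by blast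
  have invw: "i \<in> ?S \<Longrightarrow> ?inv (?w i) = i" for i using bij_betw_inv_into_left[OF bij] by blast
  have wS: "i \<in> ?S \<Longrightarrow> ?w i \<in> ?S" for i using bij_betwE[OF bij] by blast
  show "?w \<in> LE N le"
    unfolding LE_def
  proof (intro CollectI conjI bij allI impI ballI)
    fix i assume "i \<notin> ?S" then show "?w i = 0" by (rule out)
  next
    fix i j assume ij: "i \<in> ?S" "j \<in> ?S" "le i j"
    show "?w i \<le> ?w j"
    proof (cases "i = j")
      case False
      have "i \<le> j" using nat ij by blast
      then have "i < j" using False by simp
      moreover have "f i \<le> f j" using f ij by (auto simp: OP_def)
      ultimately have "f i < f j \<or> (f i = f j \<and> i < j)" by auto
      moreover have "i \<le> N" using ij by simp
      ultimately have "key N f i < key N f j" unfolding key_def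
        using key_lessI[of i N "f i" "f j" j] by blast
      then have "?w i < ?w j" using iff[OF ij(1) ij(2)] by simp
      then show ?thesis by simp
    qed simp
  qed
  have keyless: "s \<in> ?S \<Longrightarrow> t \<in> ?S \<Longrightarrow> s < t \<Longrightarrow> key N f (?inv s) < key N f (?inv t)" for s t
  proof -
    assume st: "s \<in> ?S" "t \<in> ?S" "s < t"
    show ?thesis using iff[OF invS[OF st(1)] invS[OF st(2)]] winv[OF st(1)] winv[OF st(2)] st(3) by simp
  qed
  show "gf N f \<in> seqs N d (DesSet N ?w)"
    unfolding seqs_def
  proof (intro CollectI conjI allI impI ballI)
    fix s assume "s \<notin> ?S" then show "gf N f s = 0" unfolding gf_def by (rule if_not_P)
  next
    fix s assume "s \<in> ?S" then show "gf N f s \<le> d" using f invS by (auto simp: gf_def OP_def)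
  next
    fix s assume s: "1 \<le> s \<and> s < N"
    then have "s \<in> ?S" "Suc s \<in> ?S" by auto
    then have "key N f (?inv s) < key N f (?inv (Suc s))" using keyless[of s "Suc s"] by simp
    then have "f (?inv s) \<le> f (?inv (Suc s))" using key_le_conv[OF invS invS] \<open>s \<in> ?S\<close> \<open>Suc s \<in> ?S\<close> by blast
    then show "gf N f s \<le> gf N f (Suc s)" using s by (simp add: gf_def)
  next
    fix s assume "s \<in> DesSet N ?w"
    then obtain j k where jk: "j \<in> ?S" "k \<in> ?S" "?w j = s" "?w k = s + 1" "j > k"
      unfolding DesSet_def by auto
    then have "key N f j < key N f k" using iff[OF jk(1) jk(2)] by simp
    then have "f j \<le> f k \<and> (f j = f k \<longrightarrow> j < k)" using key_le_conv[OF jk(1) jk(2)] by blast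
    then have "f j < f k" using jk by auto
    moreover have "s \<in> ?S" "Suc s \<in> ?S" using wS[OF jk(1)] wS[OF jk(2)] jk(3,4) by simp_all
    ultimately show "gf N f s < gf N f (Suc s)"
      using jk(3,4) invw[OF jk(1)] invw[OF jk(2)] by (simp add: gf_def)
  qed
  show "(\<lambda>i. gf N f (?w i)) = f"
  proof
    fix i show "gf N f (?w i) = f i"
    proof (cases "i \<in> ?S")
      case True then show ?thesis using wS invw by (simp add: gf_def)
    next
      case False
      then have "f i = 0" using f unfolding OP_def by blast
      then show ?thesis using out[OF False] by (simp add: gf_def)
    qed
  qed
qed

lemma T2:
  assumes w: "w \<in> LE N le" and g: "g \<in> seqs N d (DesSet N w)"
  shows "(\<lambda>i. g (w i)) \<in> OP N le d" "wfn N (\<lambda>i. g (w i)) = w" "gf N (\<lambda>i. g (w i)) = g"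
proof -
  let ?S = "{1..N}"
  let ?inv = "inv_into ?S w"
  let ?f = "\<lambda>i. g (w i)"
  have bij: "bij_betw w ?S ?S" using w by (simp add: LE_def)
  have out: "i \<notin> ?S \<Longrightarrow> w i = 0" for i using w by (simp add: LE_def)
  have invS: "s \<in> ?S \<Longrightarrow> ?inv s \<in> ?S" for s using bij by (metis bij_betw_def inv_into_into)
  have winv: "s \<in> ?S \<Longrightarrow> w (?inv s) = s" for s using bij_betw_inv_into_right[OF bij] by blast
  have invw: "i \<in> ?S \<Longrightarrow> ?inv (w i) = i" for i using bij_betw_inv_into_left[OF bij] by blast
  have wS: "i \<in> ?S \<Longrightarrow> w i \<in> ?S" for i using bij_betwE[OF bij] by blast
  have winj: "i \<in> ?S \<Longrightarrow> j \<in> ?S \<Longrightarrow> w i = w j \<Longrightarrow> i = j" for i j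
    using inj_onD[OF bij_betw_imp_inj_on[OF bij]] by blast
  have gst: "\<forall>s. 1 \<le> s \<and> s < N \<longrightarrow> g s \<le> g (Suc s)" using g by (simp add: seqs_def)
  have gmono: "s \<in> ?S \<Longrightarrow> t \<in> ?S \<Longrightarrow> s \<le> t \<Longrightarrow> g s \<le> g t" for s t
    using step_mono[OF gst, of s t] by auto
  have g0: "g 0 = 0" using g by (simp add: seqs_def)
  show fOP: "?f \<in> OP N le d"
    unfolding OP_def
  proof (intro CollectI conjI allI impI ballI)
    fix i assume "i \<notin> ?S" then show "g (w i) = 0" using out g0 by simp
  next
    fix i assume "i \<in> ?S" then show "g (w i) \<le> d" using g wS by (simp add: seqs_def)
  next
    fix i j assume "i \<in> ?S" "j \<in> ?S" "le i j"
    then have "w i \<le> w j" using w unfolding LE_def by blast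
    then show "g (w i) \<le> g (w j)" using gmono[OF wS wS] \<open>i \<in> ?S\<close> \<open>j \<in> ?S\<close> by blast
  qed
  have step: "u \<in> ?S \<Longrightarrow> Suc u \<in> ?S \<Longrightarrow> g u = g (Suc u) \<Longrightarrow> ?inv u < ?inv (Suc u)" for u
  proof -
    assume u: "u \<in> ?S" "Suc u \<in> ?S" "g u = g (Suc u)"
    have "\<forall>s\<in>DesSet N w. g s < g (Suc s)" using g by (simp add: seqs_def)
    then have "u \<notin> DesSet N w" using u(3) by (metis less_irrefl)
    then have "\<not> (?inv u \<in> ?S \<and> ?inv (Suc u) \<in> ?S \<and> w (?inv u) = u \<and> w (?inv (Suc u)) = u + 1 \<and> ?inv u > ?inv (Suc u))"
      unfolding DesSet_def by blast
    then have "\<not> (?inv u > ?inv (Suc u))" using invS[OF u(1)] invS[OF u(2)] winv[OF u(1)] winv[OF u(2)] by simp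
    moreover have "?inv u \<noteq> ?inv (Suc u)" using winv[OF u(1)] winv[OF u(2)] by (metis n_not_Suc_n)
    ultimately show ?thesis by simp
  qed
  have chain: "s \<in> ?S \<Longrightarrow> t \<in> ?S \<Longrightarrow> s < t \<Longrightarrow> g s = g t \<Longrightarrow> ?inv s < ?inv t" for s t
  proof (induction t)
    case 0 then show ?case by simp
  next
    case (Suc t)
    show ?case
    proof (cases "s = t")
      case True then show ?thesis using step[of t] Suc.prems by simp
    next
      case False
      then have st: "s < t" "t \<in> ?S" using Suc.prems by auto
      have "g s \<le> g t" "g t \<le> g (Suc t)" using gmono[of s t] gmono[of t "Suc t"] Suc.prems st by auto
      then have e: "g t = g s" "g t = g (Suc t)" using Suc.prems by auto
      have "?inv s < ?inv t" using Suc.IH Suc.prems st e by simp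
      moreover have "?inv t < ?inv (Suc t)" using step[of t] Suc.prems st e by simp
      ultimately show ?thesis by simp
    qed
  qed
  have C: "i \<in> ?S \<Longrightarrow> j \<in> ?S \<Longrightarrow> w i < w j \<Longrightarrow> key N ?f i < key N ?f j" for i j
  proof -
    assume ij: "i \<in> ?S" "j \<in> ?S" "w i < w j"
    have le: "g (w i) \<le> g (w j)" using gmono[OF wS[OF ij(1)] wS[OF ij(2)]] ij(3) by simp
    show ?thesis
    proof (cases "g (w i) = g (w j)")
      case True
      then have "?inv (w i) < ?inv (w j)" using chain[OF wS[OF ij(1)] wS[OF ij(2)] ij(3)] by simp
      then have "i < j" using invw ij by simp
      then show ?thesis unfolding key_def using key_lessI[of i N "g (w i)" "g (w j)" j] ij True by simp
    next
      case False
      then show ?thesis unfolding key_def using key_lessI[of i N "g (w i)" "g (w j)" j] ij le by simp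
    qed
  qed
  show wfw: "wfn N ?f = w"
  proof
    fix i show "wfn N ?f i = w i"
    proof (cases "i \<in> ?S")
      case False then show ?thesis using out[OF False] by (simp only: wfn_def rank_def if_not_P[OF False] if_False)
    next
      case True
      have eq: "{j\<in>?S. key N ?f j < key N ?f i} = {j\<in>?S. w j < w i}"
      proof (intro Collect_cong conj_cong refl iffI)
        fix j assume j: "j \<in> ?S" and k: "key N ?f j < key N ?f i"
        show "w j < w i"
        proof (rule ccontr)
          assume "\<not> w j < w i"
          then have "w i < w j \<or> w i = w j" by arith
          then show False
          proof
            assume "w i < w j" then show False using C[of i j] True j k by simp
          next
            assume "w i = w j" then have "i = j" using winj True j by simp
            then show False using k by simp
          qed
        qed
      next
        fix j assume j: "j \<in> ?S" "w j < w i"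
        show "key N ?f j < key N ?f i" using C[OF j(1) True j(2)] .
      qed
      have "w ` {j\<in>?S. w j < w i} = {1..<w i}"
      proof
        show "w ` {j\<in>?S. w j < w i} \<subseteq> {1..<w i}"
        proof (rule image_subsetI)
          fix j assume "j \<in> {j\<in>?S. w j < w i}"
          then show "w j \<in> {1..<w i}" using wS[of j] by auto
        qed
        show "{1..<w i} \<subseteq> w ` {j\<in>?S. w j < w i}"
        proof
          fix s assume s: "s \<in> {1..<w i}"
          then have "s \<in> ?S" using wS[OF True] by auto
          then have "?inv s \<in> {j\<in>?S. w j < w i}" using winv invS s by simp
          then show "s \<in> w ` {j\<in>?S. w j < w i}" using winv[OF \<open>s \<in> ?S\<close>] by (metis image_eqI)
        qed
      qed
      moreover have "inj_on w {j\<in>?S. w j < w i}" by (rule inj_on_subset[OF bij_betw_imp_inj_on[OF bij]]) auto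
      ultimately have "card {j\<in>?S. w j < w i} = card {1..<w i}"
        by (metis card_image)
      then have "card {j\<in>?S. w j < w i} = w i - 1" by simp
      moreover have "wfn N ?f i = card {j\<in>?S. key N ?f j < key N ?f i} + 1" using True by (simp add: wfn_def rank_def)
      moreover have "w i \<ge> 1" using wS[OF True] by simp
      ultimately show ?thesis using eq by simp
    qed
  qed
  show "gf N ?f = g"
  proof
    fix s show "gf N ?f s = g s"
    proof (cases "s \<in> ?S")
      case True then show ?thesis using wfw winv by (simp add: gf_def)
    next
      case False
      then have "g s = 0" using g unfolding seqs_def by blast
      then show ?thesis by (simp only: gf_def if_not_P[OF False])
    qed
  qed
qed

lemma finite_bounded_funs:
  assumes "finite S"
  shows "finite {g::nat \<Rightarrow> nat. (\<forall>s. s \<notin> S \<longrightarrow> g s = 0) \<and> (\<forall>s\<in>S. g s \<le> d)}"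
proof -
  have "{g::nat \<Rightarrow> nat. (\<forall>s. s \<notin> S \<longrightarrow> g s = 0) \<and> (\<forall>s\<in>S. g s \<le> d)}
        \<subseteq> (\<lambda>h s. if s \<in> S then h s else 0) ` (PiE S (\<lambda>_. {..d}))"
  proof
    fix g :: "nat \<Rightarrow> nat" assume g: "g \<in> {g. (\<forall>s. s \<notin> S \<longrightarrow> g s = 0) \<and> (\<forall>s\<in>S. g s \<le> d)}"
    have "g = (\<lambda>s. if s \<in> S then restrict g S s else 0)" using g by auto
    moreover have "restrict g S \<in> PiE S (\<lambda>_. {..d})" using g by auto
    ultimately show "g \<in> (\<lambda>h s. if s \<in> S then h s else 0) ` (PiE S (\<lambda>_. {..d}))" by blast
  qed
  moreover have "finite (PiE S (\<lambda>_. {..d::nat}))" using assms by (intro finite_PiE) auto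
  ultimately show ?thesis by (meson finite_imageI finite_subset)
qed

lemma finite_seqs: "finite (seqs N d D)"
  by (rule finite_subset[OF _ finite_bounded_funs[of "{1..N}" d]]) (auto simp: seqs_def)

lemma finite_LE: "finite (LE N le)"
proof (rule finite_subset[OF _ finite_bounded_funs[of "{1..N}" N]])
  show "LE N le \<subseteq> {g. (\<forall>s. s \<notin> {1..N} \<longrightarrow> g s = 0) \<and> (\<forall>s\<in>{1..N}. g s \<le> N)}"
    unfolding LE_def bij_betw_def by auto
qed simp

theorem card_OP:
  assumes nat: "\<forall>i\<in>{1..N}. \<forall>j\<in>{1..N}. le i j \<longrightarrow> i \<le> j"
  shows "card (OP N le d) = (\<Sum>w\<in>LE N le. (d + N - des N w) choose N)"
proof -
  have "bij_betw (\<lambda>(w, g) i. g (w i)) (SIGMA w:LE N le. seqs N d (DesSet N w)) (OP N le d)"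
  proof (rule bij_betw_byWitness[where f' = "\<lambda>f. (wfn N f, gf N f)"])
    show "\<forall>a\<in>SIGMA w:LE N le. seqs N d (DesSet N w). (wfn N ((\<lambda>(w, g) i. g (w i)) a), gf N ((\<lambda>(w, g) i. g (w i)) a)) = a"
      using T2 by auto
    show "\<forall>a'\<in>OP N le d. (\<lambda>(w, g) i. g (w i)) (wfn N a', gf N a') = a'"
      using T1(3)[OF _ nat] by auto
    show "(\<lambda>(w, g) i. g (w i)) ` (SIGMA w:LE N le. seqs N d (DesSet N w)) \<subseteq> OP N le d"
      using T2(1) by auto
    show "(\<lambda>f. (wfn N f, gf N f)) ` OP N le d \<subseteq> (SIGMA w:LE N le. seqs N d (DesSet N w))"
      using T1(1,2)[OF _ nat] by auto
  qed
  then have "card (OP N le d) = card (SIGMA w:LE N le. seqs N d (DesSet N w))"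
    by (metis bij_betw_same_card)
  also have "\<dots> = (\<Sum>w\<in>LE N le. card (seqs N d (DesSet N w)))"
    by (rule card_SigmaI) (auto simp: finite_LE finite_seqs)
  also have "\<dots> = (\<Sum>w\<in>LE N le. (d + N - des N w) choose N)"
    by (rule sum.cong[OF refl]) (simp add: des_eq card_seqs[OF DesSet_sub])
  finally show ?thesis .
qed


lemma card_OP_chains:
  assumes nl: "natural_labeling m n r \<phi>"
  defines "N \<equiv> m + n + r - 3"
  defines "L \<equiv> chain_sizes m n r"
  shows "card (OP N (\<lambda>i j. chains_le (\<phi> i) (\<phi> j)) d) = (\<Prod>c<3. (d + L c) choose L c)"
proof -
  let ?S = "{1..N}"
  let ?C = "chains_carrier m n r"
  let ?le = "\<lambda>i j. chains_le (\<phi> i) (\<phi> j)"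
  let ?psi = "inv_into ?S \<phi>"
  let ?A = "\<lambda>c. {xs::nat list. sorted xs \<and> length xs = L c \<and> set xs \<subseteq> {..d}}"
  have bij: "bij_betw \<phi> ?S ?C" using nl unfolding natural_labeling_def N_def by blast
  have C_iff: "x \<in> ?C \<longleftrightarrow> fst x < 3 \<and> snd x < L (fst x)" for x
    by (cases x) (simp add: chains_carrier_def L_def)
  have psiS: "x \<in> ?C \<Longrightarrow> ?psi x \<in> ?S" for x using bij_betw_inv_into[OF bij] bij_betwE by blast
  have phipsi: "x \<in> ?C \<Longrightarrow> \<phi> (?psi x) = x" for x using bij_betw_inv_into_right[OF bij] by blast
  have psiphi: "i \<in> ?S \<Longrightarrow> ?psi (\<phi> i) = i" for i using bij_betw_inv_into_left[OF bij] by blast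
  have phiC: "i \<in> ?S \<Longrightarrow> \<phi> i \<in> ?C" for i using bij_betwE[OF bij] by blast
  define F where "F f = restrict (\<lambda>c. map (\<lambda>t. f (?psi (c, t))) [0..<L c]) {..<3}" for f :: "nat \<Rightarrow> nat"
  define G where "G X = (\<lambda>i. if i \<in> ?S then X (fst (\<phi> i)) ! snd (\<phi> i) else 0)" for X :: "nat \<Rightarrow> nat list"
  have "bij_betw F (OP N ?le d) (PiE {..<3} ?A)"
  proof (rule bij_betw_byWitness[where f' = G])
    show "\<forall>f\<in>OP N ?le d. G (F f) = f"
    proof (intro ballI ext)
      fix f i assume f: "f \<in> OP N ?le d"
      show "G (F f) i = f i"
      proof (cases "i \<in> ?S")
        case True
        have "\<phi> i \<in> ?C" using phiC[OF True] .
        then have "fst (\<phi> i) < 3" "snd (\<phi> i) < L (fst (\<phi> i))" using C_iff[of "\<phi> i"] by auto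
        then show ?thesis using True psiphi[OF True] by (simp add: G_def F_def)
      next
        case False
        then have "f i = 0" using f unfolding OP_def by blast
        then show ?thesis by (simp only: G_def if_not_P[OF False] if_False)
      qed
    qed
    show "\<forall>X\<in>PiE {..<3} ?A. F (G X) = X"
    proof
      fix X assume X: "X \<in> PiE {..<3} ?A"
      show "F (G X) = X"
      proof
        fix c show "F (G X) c = X c"
        proof (cases "c < 3")
          case False then show ?thesis using X by (simp add: F_def PiE_def extensional_def)
        next
          case True
          have len: "length (X c) = L c" using X True by (auto simp: PiE_def Pi_def)
          show ?thesis
          proof (rule nth_equalityI)
            show "length (F (G X) c) = length (X c)" using True len by (simp add: F_def)
            fix t assume "t < length (F (G X) c)"
            then have t: "t < L c" using True by (simp add: F_def)
            then have x: "(c, t) \<in> ?C" using C_iff True by simp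
            show "F (G X) c ! t = X c ! t"
              using True t psiS[OF x] phipsi[OF x] by (simp add: F_def G_def)
          qed
        qed
      qed
    qed
    show "F ` OP N ?le d \<subseteq> PiE {..<3} ?A"
    proof (rule image_subsetI)
      fix f assume f: "f \<in> OP N ?le d"
      show "F f \<in> PiE {..<3} ?A"
      proof (rule PiE_I)
        fix c :: nat assume c: "c \<in> {..<3}"
        have xs: "(c, t) \<in> ?C" if "t < L c" for t using C_iff c that by simp
        have "sorted (map (\<lambda>t. f (?psi (c, t))) [0..<L c])"
          unfolding sorted_iff_nth_mono
        proof (intro allI impI)
          fix t t' assume tt: "t \<le> t'" "t' < length (map (\<lambda>t. f (?psi (c, t))) [0..<L c])"
          then have t: "t < L c" "t' < L c" by auto
          have "chains_le (\<phi> (?psi (c, t))) (\<phi> (?psi (c, t')))"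
            using phipsi[OF xs[OF t(1)]] phipsi[OF xs[OF t(2)]] tt by (simp add: chains_le_def)
          then have "f (?psi (c, t)) \<le> f (?psi (c, t'))"
            using f psiS[OF xs[OF t(1)]] psiS[OF xs[OF t(2)]] unfolding OP_def by blast
          then show "map (\<lambda>t. f (?psi (c, t))) [0..<L c] ! t \<le> map (\<lambda>t. f (?psi (c, t))) [0..<L c] ! t'"
            using t by simp
        qed
        moreover have "set (map (\<lambda>t. f (?psi (c, t))) [0..<L c]) \<subseteq> {..d}"
        proof
          fix x assume "x \<in> set (map (\<lambda>t. f (?psi (c, t))) [0..<L c])"
          then obtain t where t: "t < L c" "x = f (?psi (c, t))" by auto
          then show "x \<in> {..d}" using f psiS[OF xs[OF t(1)]] unfolding OP_def by auto
        qed
        ultimately show "F f c \<in> ?A c" using c by (simp add: F_def)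
      next
        fix c :: nat assume "c \<notin> {..<3}" then show "F f c = undefined" by (simp add: F_def)
      qed
    qed
    show "G ` PiE {..<3} ?A \<subseteq> OP N ?le d"
    proof (rule image_subsetI)
      fix X assume X: "X \<in> PiE {..<3} ?A"
      have XA: "c < 3 \<Longrightarrow> X c \<in> ?A c" for c using X by (auto simp: PiE_def Pi_def)
      show "G X \<in> OP N ?le d"
        unfolding OP_def
      proof (intro CollectI conjI allI impI ballI)
        fix i assume "i \<notin> ?S" then show "G X i = 0" unfolding G_def by (rule if_not_P)
      next
        fix i assume i: "i \<in> ?S"
        then have c: "fst (\<phi> i) < 3" "snd (\<phi> i) < L (fst (\<phi> i))" using phiC C_iff by auto
        then have "X (fst (\<phi> i)) ! snd (\<phi> i) \<in> set (X (fst (\<phi> i)))" using XA[OF c(1)] by auto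
        then show "G X i \<le> d" using XA[OF c(1)] i by (auto simp: G_def)
      next
        fix i j assume ij: "i \<in> ?S" "j \<in> ?S" "?le i j"
        then have c: "fst (\<phi> i) < 3" "snd (\<phi> i) < L (fst (\<phi> i))" "snd (\<phi> j) < L (fst (\<phi> j))"
          using phiC C_iff by auto
        have e: "fst (\<phi> i) = fst (\<phi> j)" "snd (\<phi> i) \<le> snd (\<phi> j)" using ij(3) by (auto simp: chains_le_def)
        have "sorted (X (fst (\<phi> i)))" "length (X (fst (\<phi> i))) = L (fst (\<phi> i))" using XA[OF c(1)] by auto
        then have "X (fst (\<phi> i)) ! snd (\<phi> i) \<le> X (fst (\<phi> i)) ! snd (\<phi> j)"
          using c e by (simp add: sorted_iff_nth_mono)
        then show "G X i \<le> G X j" using ij e by (simp add: G_def)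
      qed
    qed
  qed
  then have "card (OP N ?le d) = card (PiE {..<3} ?A)" by (rule bij_betw_same_card)
  also have "\<dots> = (\<Prod>c<3. card (?A c))" by (rule card_PiE) simp
  also have "\<dots> = (\<Prod>c<3. (d + L c) choose L c)" by (simp add: card_sorted_lists)
  finally show ?thesis .
qed


lemma fps_times_one_minus_X_nth:
  "fps_nth (f * (1 - fps_X)) n = fps_nth f n - (if n = 0 then 0 else fps_nth f (n - 1))"
  for f :: "int fps"
  by (simp add: right_diff_distrib fps_X_mult_right_nth)

lemma fps_binom_base:
  "Abs_fps (\<lambda>d. int ((d + N) choose N)) * (1 - fps_X) ^ Suc N = (1 :: int fps)"
proof (induction N)
  case 0
  show ?case
    by (rule fps_ext) (simp add: fps_times_one_minus_X_nth)
next
  case (Suc N)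
  have "Abs_fps (\<lambda>d. int ((d + Suc N) choose Suc N)) * (1 - fps_X) = Abs_fps (\<lambda>d. int ((d + N) choose N))"
  proof (rule fps_ext)
    fix n
    show "fps_nth (Abs_fps (\<lambda>d. int ((d + Suc N) choose Suc N)) * (1 - fps_X)) n =
          fps_nth (Abs_fps (\<lambda>d. int ((d + N) choose N))) n"
    proof (cases n)
      case 0 then show ?thesis by (simp add: fps_times_one_minus_X_nth)
    next
      case (Suc k)
      have "(Suc k + Suc N) choose Suc N = ((Suc k + N) choose N) + ((k + Suc N) choose Suc N)"
        by simp
      then show ?thesis using Suc by (simp add: fps_times_one_minus_X_nth)
    qed
  qed
  then have eq: "Abs_fps (\<lambda>d. int ((d + Suc N) choose Suc N)) * (1 - fps_X) = Abs_fps (\<lambda>d. int ((d + N) choose N))" .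
  have "Abs_fps (\<lambda>d. int ((d + Suc N) choose Suc N)) * (1 - fps_X) ^ Suc (Suc N) =
      (Abs_fps (\<lambda>d. int ((d + Suc N) choose Suc N)) * (1 - fps_X)) * (1 - fps_X) ^ Suc N"
    by (simp only: power_Suc[of _ "Suc N"] mult.assoc)
  also have "\<dots> = Abs_fps (\<lambda>d. int ((d + N) choose N)) * (1 - fps_X) ^ Suc N"
    by (simp only: eq)
  also have "\<dots> = 1" by (rule Suc.IH)
  finally show ?case .
qed

lemma fps_binom_shift:
  assumes "k \<le> N"
  shows "Abs_fps (\<lambda>d. int ((d + N - k) choose N)) * (1 - fps_X) ^ Suc N = (fps_X ^ k :: int fps)"
proof -
  have "Abs_fps (\<lambda>d. int ((d + N - k) choose N)) = fps_X ^ k * Abs_fps (\<lambda>d. int ((d + N) choose N))"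
  proof (rule fps_ext)
    fix n
    show "fps_nth (Abs_fps (\<lambda>d. int ((d + N - k) choose N))) n =
          fps_nth (fps_X ^ k * Abs_fps (\<lambda>d. int ((d + N) choose N))) n"
    proof (cases "n < k")
      case True
      then have "n + N - k < N" using assms by simp
      then show ?thesis using True by (simp add: fps_X_power_mult_nth)
    next
      case False
      then have "n + N - k = n - k + N" by simp
      then show ?thesis using False by (simp add: fps_X_power_mult_nth)
    qed
  qed
  then show ?thesis using fps_binom_base[of N] by (simp add: mult.assoc)
qed


type_synonym mon3 = "(nat \<times> nat \<times> nat) \<Rightarrow>\<^sub>0 nat"

lemma lookup_cscale: "Poly_Mapping.lookup (cscale c p) a = c * Poly_Mapping.lookup p a"
proof -
  have "cscale c p = Poly_Mapping.map ((*) c) p"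
    by (simp add: cscale_def mult_map_scale_conv_mult)
  then show ?thesis by (simp add: map.rep_eq when_def)
qed

interpretation VS: vector_space "cscale :: 'a::field \<Rightarrow> 'a mpoly3 \<Rightarrow> 'a mpoly3"
  by unfold_locales (auto intro!: poly_mapping_eqI simp: lookup_cscale lookup_add algebra_simps)

definition mon :: "(nat \<times> nat \<times> nat) multiset \<Rightarrow> mon3" where
  "mon M = Abs_poly_mapping (count M)"

definition toM :: "mon3 \<Rightarrow> (nat \<times> nat \<times> nat) multiset" where
  "toM a = Abs_multiset (Poly_Mapping.lookup a)"

lemma lookup_mon: "Poly_Mapping.lookup (mon M) = count M"
proof -
  have "{x. count M x \<noteq> 0} = set_mset M" by auto
  then show ?thesis unfolding mon_def by (simp add: lookup_Abs_poly_mapping)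
qed

lemma count_toM: "count (toM a) = Poly_Mapping.lookup a"
proof -
  have "{x. 0 < Poly_Mapping.lookup a x} = Poly_Mapping.keys a" by (auto simp: in_keys_iff)
  then show ?thesis unfolding toM_def by (simp add: count_Abs_multiset)
qed

lemma mon_toM [simp]: "mon (toM a) = a"
  by (rule poly_mapping_eqI) (simp add: lookup_mon count_toM)

lemma toM_mon [simp]: "toM (mon M) = M"
  by (rule multiset_eqI) (simp add: lookup_mon count_toM)

lemma mon_inj: "mon M = mon M' \<longleftrightarrow> M = M'"
  by (metis toM_mon)

lemma keys_mon: "Poly_Mapping.keys (mon M) = set_mset M"
  by (auto simp: in_keys_iff lookup_mon)

lemma mon_add: "mon (M + M') = mon M + mon M'"
  by (rule poly_mapping_eqI) (simp add: lookup_mon lookup_add)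

lemma mon_single: "mon {#v#} = Poly_Mapping.single v 1"
  by (rule poly_mapping_eqI) (simp add: lookup_mon lookup_single when_def)

lemma deg_mon: "(\<Sum>v\<in>Poly_Mapping.keys (mon M). Poly_Mapping.lookup (mon M) v) = size M"
  by (simp add: keys_mon lookup_mon size_multiset_overloaded_eq)

definition X :: "(nat \<times> nat \<times> nat) multiset \<Rightarrow> 'a::field mpoly3" where
  "X M = Poly_Mapping.single (mon M) 1"

lemma X_add: "X (M + M') = X M * X M'"
  by (simp add: X_def mon_add mult_single)

lemma var3_X: "var3 i j k = X {#(i, j, k)#}"
  by (simp add: var3_def X_def mon_single)

lemma X_pair: "var3 i j k * var3 i' j' k' = X {#(i, j, k), (i', j', k')#}"
proof -
  have "{#(i, j, k), (i', j', k')#} = {#(i, j, k)#} + {#(i', j', k')#}" by simp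
  then show ?thesis by (simp only: var3_X X_add)
qed

lemma lookup_X: "Poly_Mapping.lookup (X M) a = (if a = mon M then 1 else 0)"
  by (simp add: X_def lookup_single when_def eq_commute)

lemma keys_X: "Poly_Mapping.keys (X M) = {mon M}"
  by (simp add: X_def)

lemma X_inj: "(X M :: 'a::field mpoly3) = X M' \<longleftrightarrow> M = M'"
proof
  assume h: "(X M :: 'a mpoly3) = X M'"
  have "Poly_Mapping.keys (X M :: 'a mpoly3) = Poly_Mapping.keys (X M' :: 'a mpoly3)" using h by (rule arg_cong)
  then have "mon M = mon M'" by (simp add: keys_X)
  then show "M = M'" by (simp add: mon_inj)
qed simp

subsection \<open>The ring R and the ideal\<close>

lemma ringR_add:
  assumes "p \<in> ringR m n r" "q \<in> ringR m n r"
  shows "p + q \<in> ringR m n r"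
  unfolding ringR_def mem_Collect_eq
proof (rule ballI)
  fix a assume "a \<in> Poly_Mapping.keys (p + q)"
  then have "a \<in> Poly_Mapping.keys p \<or> a \<in> Poly_Mapping.keys q" using keys_add[of p q] by blast
  then show "Poly_Mapping.keys a \<subseteq> vars3 m n r" using assms unfolding ringR_def by blast
qed

lemma ringR_mult:
  assumes "p \<in> ringR m n r" "q \<in> ringR m n r"
  shows "p * q \<in> ringR m n r"
  unfolding ringR_def mem_Collect_eq
proof (rule ballI)
  fix a assume "a \<in> Poly_Mapping.keys (p * q)"
  then obtain b c where "a = b + c" "b \<in> Poly_Mapping.keys p" "c \<in> Poly_Mapping.keys q"
    using keys_mult by blast
  moreover have "Poly_Mapping.keys b \<subseteq> vars3 m n r" "Poly_Mapping.keys c \<subseteq> vars3 m n r"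
    using assms \<open>b \<in> Poly_Mapping.keys p\<close> \<open>c \<in> Poly_Mapping.keys q\<close> unfolding ringR_def by auto
  ultimately show "Poly_Mapping.keys a \<subseteq> vars3 m n r"
    using keys_add[of b c] by blast
qed

lemma ringR_X: "set_mset M \<subseteq> vars3 m n r \<Longrightarrow> X M \<in> ringR m n r"
  by (simp add: ringR_def keys_X keys_mon)

lemma ringR_const: "Poly_Mapping.single 0 c \<in> ringR m n r"
  by (simp add: ringR_def)

lemma ringR_uminus: "p \<in> ringR m n r \<Longrightarrow> - p \<in> ringR m n r"
  by (simp add: ringR_def keys_minus)

lemma ideal_genI:
  assumes "finite F" "F \<subseteq> G" "\<forall>g\<in>F. c g \<in> ringR m n r" "p = (\<Sum>g\<in>F. c g * g)"
  shows "p \<in> ideal_gen m n r G"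
  unfolding ideal_gen_def using assms by blast

lemma ideal_zero: "0 \<in> ideal_gen m n r G"
  by (rule ideal_genI[of "{}"]) auto

lemma ideal_gen_mem: "g \<in> G \<Longrightarrow> g \<in> ideal_gen m n r G"
  by (rule ideal_genI[of "{g}" _ "\<lambda>_. 1"]) (auto simp: ringR_def)

lemma ideal_add:
  assumes "p \<in> ideal_gen m n r G" "q \<in> ideal_gen m n r G"
  shows "p + q \<in> ideal_gen m n r G"
proof -
  obtain F1 c1 where 1: "p = (\<Sum>g\<in>F1. c1 g * g)" "finite F1" "F1 \<subseteq> G" "\<forall>g\<in>F1. c1 g \<in> ringR m n r"
    using assms(1) unfolding ideal_gen_def by blast
  obtain F2 c2 where 2: "q = (\<Sum>g\<in>F2. c2 g * g)" "finite F2" "F2 \<subseteq> G" "\<forall>g\<in>F2. c2 g \<in> ringR m n r"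
    using assms(2) unfolding ideal_gen_def by blast
  define c where "c g = (if g \<in> F1 then c1 g else 0) + (if g \<in> F2 then c2 g else 0)" for g
  have "(\<Sum>g\<in>F1 \<union> F2. c g * g) = (\<Sum>g\<in>F1 \<union> F2. (if g \<in> F1 then c1 g * g else 0) + (if g \<in> F2 then c2 g * g else 0))"
    by (rule sum.cong) (auto simp: c_def distrib_right)
  also have "\<dots> = (\<Sum>g\<in>F1 \<union> F2. (if g \<in> F1 then c1 g * g else 0)) + (\<Sum>g\<in>F1 \<union> F2. (if g \<in> F2 then c2 g * g else 0))"
    by (rule sum.distrib)
  also have "\<dots> = p + q"
    using 1 2 by (simp add: sum.If_cases Int_absorb1 Int_absorb2)
  finally have e: "p + q = (\<Sum>g\<in>F1 \<union> F2. c g * g)" ..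
  have "\<forall>g\<in>F1 \<union> F2. c g \<in> ringR m n r"
  proof
    fix g assume "g \<in> F1 \<union> F2"
    have z: "(0::'a mpoly3) \<in> ringR m n r" by (simp add: ringR_def)
    show "c g \<in> ringR m n r" unfolding c_def
      by (intro ringR_add) (use 1(4) 2(4) z in auto)
  qed
  then show ?thesis using e 1 2 by (intro ideal_genI[of "F1 \<union> F2" _ c]) auto
qed

lemma ideal_mult:
  assumes "p \<in> ideal_gen m n r G" "h \<in> ringR m n r"
  shows "h * p \<in> ideal_gen m n r G"
proof -
  obtain F c where 1: "p = (\<Sum>g\<in>F. c g * g)" "finite F" "F \<subseteq> G" "\<forall>g\<in>F. c g \<in> ringR m n r"
    using assms(1) unfolding ideal_gen_def by blast
  have "h * p = (\<Sum>g\<in>F. (h * c g) * g)" using 1 by (simp add: sum_distrib_left mult.assoc)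
  moreover have "\<forall>g\<in>F. h * c g \<in> ringR m n r" using 1 assms(2) by (simp add: ringR_mult)
  ultimately show ?thesis using 1 by (intro ideal_genI[of F _ "\<lambda>g. h * c g"]) auto
qed

lemma ideal_uminus:
  assumes "p \<in> ideal_gen m n r G"
  shows "- p \<in> ideal_gen m n r G"
proof -
  have "(- 1) * p \<in> ideal_gen m n r G"
    using ideal_mult[OF assms ringR_uminus[OF ringR_const[where c = 1]]] by simp
  then show ?thesis by simp
qed

lemma ideal_diff:
  "p \<in> ideal_gen m n r G \<Longrightarrow> q \<in> ideal_gen m n r G \<Longrightarrow> p - q \<in> ideal_gen m n r G"
  using ideal_add[OF _ ideal_uminus] by (metis diff_conv_add_uminus)


lemma in_vars3: "(i, j, k) \<in> vars3 m n r \<longleftrightarrow> 1 \<le> i \<and> i \<le> m \<and> 1 \<le> j \<and> j \<le> n \<and> 1 \<le> k \<and> k \<le> r"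
  by (simp add: vars3_def)

lemma hgen:
  assumes "1 \<le> i" "i < i'" "i' \<le> m" "1 \<le> j" "j \<le> n" "1 \<le> j'" "j' \<le> n"
    "1 \<le> k" "k \<le> r" "1 \<le> k'" "k' \<le> r" "k < k' \<or> (k = k' \<and> j < j')"
  shows "X {#(i, j, k), (i', j', k')#} - X {#(i', j, k), (i, j', k')#} \<in> (Imnr m n r :: 'a::field mpoly3 set)"
proof -
  have "(var3 i j k * var3 i' j' k' - var3 i j' k' * var3 i' j k :: 'a mpoly3) \<in> hminors m n r"
    unfolding hminors_def using assms by blast
  then have "(var3 i j k * var3 i' j' k' - var3 i j' k' * var3 i' j k :: 'a mpoly3) \<in> Imnr m n r"
    unfolding Imnr_def by (intro ideal_gen_mem) blast
  moreover have "{#(i, j', k'), (i', j, k)#} = {#(i', j, k), (i, j', k')#}" by (simp add: add_mset_commute)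
  ultimately show ?thesis by (simp add: X_pair)
qed

lemma vgen:
  assumes "1 \<le> i" "i \<le> m" "1 \<le> i'" "i' \<le> m" "1 \<le> j" "j < j'" "j' \<le> n"
    "1 \<le> k" "k \<le> r" "1 \<le> k'" "k' \<le> r" "k < k' \<or> (k = k' \<and> i < i')"
  shows "X {#(i, j, k), (i', j', k')#} - X {#(i, j', k), (i', j, k')#} \<in> (Imnr m n r :: 'a::field mpoly3 set)"
proof -
  have "(var3 i j k * var3 i' j' k' - var3 i j' k * var3 i' j k' :: 'a mpoly3) \<in> vminors m n r"
    unfolding vminors_def using assms by blast
  then have "(var3 i j k * var3 i' j' k' - var3 i j' k * var3 i' j k' :: 'a mpoly3) \<in> Imnr m n r"
    unfolding Imnr_def by (intro ideal_gen_mem) blast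
  then show ?thesis by (simp add: X_pair)
qed

lemma Imnr_uminus: "p \<in> Imnr m n r \<Longrightarrow> - p \<in> Imnr m n r"
  unfolding Imnr_def by (rule ideal_uminus)

lemma Imnr_zero: "0 \<in> Imnr m n r"
  unfolding Imnr_def by (rule ideal_zero)

lemma neg_diff_mem: "(b - a :: 'a::field mpoly3) \<in> Imnr m n r \<Longrightarrow> a - b \<in> Imnr m n r"
  using Imnr_uminus[of "b - a"] by simp

lemma iswap_lt:
  assumes p: "(i, j, k) \<in> vars3 m n r" and q: "(i', j', k') \<in> vars3 m n r" and lt: "i < i'"
  shows "X {#(i, j, k), (i', j', k')#} - X {#(i', j, k), (i, j', k')#} \<in> (Imnr m n r :: 'a::field mpoly3 set)"
proof (cases "k < k' \<or> (k = k' \<and> j < j')")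
  case True
  then show ?thesis using hgen[of i i' m j n j' k r k'] p q lt by (simp add: in_vars3)
next
  case False
  show ?thesis
  proof (cases "j = j' \<and> k = k'")
    case True
    then have "{#(i', j, k), (i, j', k')#} = {#(i, j, k), (i', j', k')#}" by (simp add: add_mset_commute)
    then show ?thesis by (simp add: Imnr_zero)
  next
    case F2: False
    then have "k' < k \<or> (k' = k \<and> j' < j)" using False by auto
    then have "X {#(i, j', k'), (i', j, k)#} - X {#(i', j', k'), (i, j, k)#} \<in> (Imnr m n r :: 'a::field mpoly3 set)"
      using hgen[of i i' m j' n j k' r k] p q lt by (simp add: in_vars3)
    moreover have "{#(i, j', k'), (i', j, k)#} = {#(i', j, k), (i, j', k')#}"
      "{#(i', j', k'), (i, j, k)#} = {#(i, j, k), (i', j', k')#}" by (simp_all add: add_mset_commute)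
    ultimately show ?thesis using neg_diff_mem by metis
  qed
qed

lemma iswap:
  assumes p: "(i, j, k) \<in> vars3 m n r" and q: "(i', j', k') \<in> vars3 m n r"
  shows "X {#(i, j, k), (i', j', k')#} - X {#(i', j, k), (i, j', k')#} \<in> (Imnr m n r :: 'a::field mpoly3 set)"
proof -
  consider "i < i'" | "i = i'" | "i' < i" by arith
  then show ?thesis
  proof cases
    case 1 then show ?thesis using iswap_lt[OF p q] by blast
  next
    case 2 then show ?thesis by (simp add: Imnr_zero add_mset_commute)
  next
    case 3
    have "X {#(i', j', k'), (i, j, k)#} - X {#(i, j', k'), (i', j, k)#} \<in> (Imnr m n r :: 'a::field mpoly3 set)"
      using iswap_lt[OF q p 3] by blast
    moreover have "{#(i', j', k'), (i, j, k)#} = {#(i, j, k), (i', j', k')#}"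
      "{#(i, j', k'), (i', j, k)#} = {#(i', j, k), (i, j', k')#}" by (simp_all add: add_mset_commute)
    ultimately show ?thesis by simp
  qed
qed

lemma jswap_lt:
  assumes p: "(i, j, k) \<in> vars3 m n r" and q: "(i', j', k') \<in> vars3 m n r" and lt: "j < j'"
  shows "X {#(i, j, k), (i', j', k')#} - X {#(i, j', k), (i', j, k')#} \<in> (Imnr m n r :: 'a::field mpoly3 set)"
proof (cases "k < k' \<or> (k = k' \<and> i < i')")
  case True
  then show ?thesis using vgen[of i m i' j j' n k r k'] p q lt by (simp add: in_vars3)
next
  case False
  show ?thesis
  proof (cases "i = i' \<and> k = k'")
    case True
    then have "{#(i, j', k), (i', j, k')#} = {#(i, j, k), (i', j', k')#}" by (simp add: add_mset_commute)
    then show ?thesis by (simp add: Imnr_zero)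
  next
    case F2: False
    then have "k' < k \<or> (k' = k \<and> i' < i)" using False by auto
    then have "X {#(i', j, k'), (i, j', k)#} - X {#(i', j', k'), (i, j, k)#} \<in> (Imnr m n r :: 'a::field mpoly3 set)"
      using vgen[of i' m i j j' n k' r k] p q lt by (simp add: in_vars3)
    moreover have "{#(i', j, k'), (i, j', k)#} = {#(i, j', k), (i', j, k')#}"
      "{#(i', j', k'), (i, j, k)#} = {#(i, j, k), (i', j', k')#}" by (simp_all add: add_mset_commute)
    ultimately show ?thesis using neg_diff_mem by metis
  qed
qed

lemma jswap:
  assumes p: "(i, j, k) \<in> vars3 m n r" and q: "(i', j', k') \<in> vars3 m n r"
  shows "X {#(i, j, k), (i', j', k')#} - X {#(i, j', k), (i', j, k')#} \<in> (Imnr m n r :: 'a::field mpoly3 set)"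
proof -
  consider "j < j'" | "j = j'" | "j' < j" by arith
  then show ?thesis
  proof cases
    case 1 then show ?thesis using jswap_lt[OF p q] by blast
  next
    case 2 then show ?thesis by (simp add: Imnr_zero add_mset_commute)
  next
    case 3
    have "X {#(i', j', k'), (i, j, k)#} - X {#(i', j, k'), (i, j', k)#} \<in> (Imnr m n r :: 'a::field mpoly3 set)"
      using jswap_lt[OF q p 3] by blast
    moreover have "{#(i', j', k'), (i, j, k)#} = {#(i, j, k), (i', j', k')#}"
      "{#(i', j, k'), (i, j', k)#} = {#(i, j', k), (i', j, k')#}" by (simp_all add: add_mset_commute)
    ultimately show ?thesis by simp
  qed
qed


lemma Imnr_add: "p \<in> Imnr m n r \<Longrightarrow> q \<in> Imnr m n r \<Longrightarrow> p + q \<in> Imnr m n r"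
  unfolding Imnr_def by (rule ideal_add)

lemma Imnr_mult: "p \<in> Imnr m n r \<Longrightarrow> h \<in> ringR m n r \<Longrightarrow> h * p \<in> Imnr m n r"
  unfolding Imnr_def by (rule ideal_mult)

lemma Imnr_trans:
  "(a - b :: 'a::field mpoly3) \<in> Imnr m n r \<Longrightarrow> b - c \<in> Imnr m n r \<Longrightarrow> a - c \<in> Imnr m n r"
  using Imnr_add[of "a - b" m n r "b - c"] by simp

definition proj :: "(nat \<times> nat \<times> nat) multiset \<Rightarrow> nat multiset \<times> nat multiset \<times> nat multiset" where
  "proj M = (image_mset fst M, image_mset (fst \<circ> snd) M, image_mset (snd \<circ> snd) M)"

lemma proj_add_mset: "proj (add_mset x M) = (add_mset (fst x) (fst (proj M)), add_mset (fst (snd x)) (fst (snd (proj M))),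
   add_mset (snd (snd x)) (snd (snd (proj M))))"
  by (simp add: proj_def)

lemma proj_plus: "proj (M + M') = (fst (proj M) + fst (proj M'), fst (snd (proj M)) + fst (snd (proj M')),
   snd (snd (proj M)) + snd (snd (proj M')))"
  by (simp add: proj_def)

lemma mult_X_diff:
  assumes "set_mset R \<subseteq> vars3 m n r" "X A - X B \<in> (Imnr m n r :: 'a::field mpoly3 set)"
  shows "X (R + A) - X (R + B) \<in> (Imnr m n r :: 'a mpoly3 set)"
proof -
  have "X R * (X A - X B) \<in> (Imnr m n r :: 'a mpoly3 set)"
    by (rule Imnr_mult[OF assms(2) ringR_X[OF assms(1)]])
  then show ?thesis by (simp add: X_add right_diff_distrib)
qed

lemma stepI:
  assumes V: "set_mset M \<subseteq> vars3 m n r" and e1: "e1 \<in># M" and e3: "e3 \<in># M"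
  shows "\<exists>M1. X M - X M1 \<in> (Imnr m n r :: 'a::field mpoly3 set) \<and> proj M1 = proj M \<and>
           set_mset M1 \<subseteq> vars3 m n r \<and> (fst e1, snd e3) \<in># M1"
proof (cases "e1 = e3")
  case True
  then show ?thesis using e1 V Imnr_zero[of m n r] by (intro exI[of _ M]) auto
next
  case False
  obtain i j k where p: "e3 = (i, j, k)" by (cases e3) auto
  obtain i' j' k' where q: "e1 = (i', j', k')" by (cases e1) auto
  define R where "R = M - {#e3#} - {#e1#}"
  have e1': "e1 \<in># M - {#e3#}" using e1 False by (simp add: in_diff_count)
  have M: "M = R + {#(i, j, k), (i', j', k')#}"
    unfolding R_def p[symmetric] q[symmetric] using e1' e3
    by (metis add_mset_add_single insert_DiffM union_mset_add_mset_right add_mset_diff_bothsides)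
  have pV: "(i, j, k) \<in> vars3 m n r" and qV: "(i', j', k') \<in> vars3 m n r" using V e1 e3 p q by auto
  have RV: "set_mset R \<subseteq> vars3 m n r" using V M by auto
  let ?M1 = "R + {#(i', j, k), (i, j', k')#}"
  have "X M - X ?M1 \<in> (Imnr m n r :: 'a mpoly3 set)"
    using mult_X_diff[OF RV iswap[OF pV qV]] M by simp
  moreover have "proj ?M1 = proj M" using M by (simp add: proj_def)
  moreover have "set_mset ?M1 \<subseteq> vars3 m n r" using RV pV qV by (auto simp: vars3_def)
  moreover have "(fst e1, snd e3) \<in># ?M1" using p q by simp
  ultimately show ?thesis by blast
qed

lemma stepJ:
  assumes V: "set_mset M \<subseteq> vars3 m n r" and e: "e \<in># M" and e2: "e2 \<in># M"
  shows "\<exists>M1. X M - X M1 \<in> (Imnr m n r :: 'a::field mpoly3 set) \<and> proj M1 = proj M \<and>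
           set_mset M1 \<subseteq> vars3 m n r \<and> (fst e, fst (snd e2), snd (snd e)) \<in># M1"
proof (cases "e = e2")
  case True
  then show ?thesis using e V Imnr_zero[of m n r] by (intro exI[of _ M]) auto
next
  case False
  obtain i j k where p: "e = (i, j, k)" by (cases e) auto
  obtain i' j' k' where q: "e2 = (i', j', k')" by (cases e2) auto
  define R where "R = M - {#e#} - {#e2#}"
  have e2': "e2 \<in># M - {#e#}" using e2 False by (simp add: in_diff_count)
  have M: "M = R + {#(i, j, k), (i', j', k')#}"
    unfolding R_def p[symmetric] q[symmetric] using e2' e
    by (metis add_mset_add_single insert_DiffM union_mset_add_mset_right add_mset_diff_bothsides)
  have pV: "(i, j, k) \<in> vars3 m n r" and qV: "(i', j', k') \<in> vars3 m n r" using V e e2 p q by auto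
  have RV: "set_mset R \<subseteq> vars3 m n r" using V M by auto
  let ?M1 = "R + {#(i, j', k), (i', j, k')#}"
  have "X M - X ?M1 \<in> (Imnr m n r :: 'a mpoly3 set)"
    using mult_X_diff[OF RV jswap[OF pV qV]] M by simp
  moreover have "proj ?M1 = proj M" using M by (simp add: proj_def)
  moreover have "set_mset ?M1 \<subseteq> vars3 m n r" using RV pV qV by (auto simp: vars3_def)
  moreover have "(fst e, fst (snd e2), snd (snd e)) \<in># ?M1" using p q by simp
  ultimately show ?thesis by blast
qed

lemma cong_proj:
  assumes "set_mset M \<subseteq> vars3 m n r" "set_mset M' \<subseteq> vars3 m n r" "proj M = proj M'"
  shows "X M - X M' \<in> (Imnr m n r :: 'a::field mpoly3 set)"
  using assms
proof (induction M' arbitrary: M)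
  case empty
  then have "M = {#}" by (simp add: proj_def)
  then show ?case by (simp add: Imnr_zero)
next
  case (add t M'' M)
  obtain a b c where t: "t = (a, b, c)" by (cases t) auto
  have P: "proj M = proj (add_mset t M'')" by fact
  have "a \<in># image_mset fst M" using P t by (simp add: proj_def)
  then obtain e1 where e1: "e1 \<in># M" "fst e1 = a" by auto
  have "c \<in># image_mset (snd \<circ> snd) M" using P t by (simp add: proj_def)
  then obtain e3 where e3: "e3 \<in># M" "snd (snd e3) = c" by auto
  obtain M1 where M1: "X M - X M1 \<in> (Imnr m n r :: 'a mpoly3 set)" "proj M1 = proj M"
      "set_mset M1 \<subseteq> vars3 m n r" "(fst e1, snd e3) \<in># M1"
    using stepI[OF add.prems(1) e1(1) e3(1)] by blast
  have "b \<in># image_mset (fst \<circ> snd) M1" using P t M1(2) by (simp add: proj_def)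
  then obtain e2 where e2: "e2 \<in># M1" "fst (snd e2) = b" by auto
  obtain M2 where M2: "X M1 - X M2 \<in> (Imnr m n r :: 'a mpoly3 set)" "proj M2 = proj M1"
      "set_mset M2 \<subseteq> vars3 m n r" "(fst (fst e1, snd e3), fst (snd e2), snd (snd (fst e1, snd e3))) \<in># M2"
    using stepJ[OF M1(3) M1(4) e2(1)] by blast
  have tM2: "t \<in># M2" using M2(4) e1 e2 e3 t by simp
  define R2 where "R2 = M2 - {#t#}"
  have M2eq: "M2 = add_mset t R2" using tM2 by (simp add: R2_def)
  have "proj R2 = proj M''" using M2(2) M1(2) P unfolding M2eq by (simp add: proj_def)
  moreover have "set_mset R2 \<subseteq> vars3 m n r" using M2(3) M2eq by auto
  moreover have "set_mset M'' \<subseteq> vars3 m n r" using add.prems(2) by auto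
  ultimately have IH: "X R2 - X M'' \<in> (Imnr m n r :: 'a mpoly3 set)" using add.IH by blast
  have tV: "set_mset {#t#} \<subseteq> vars3 m n r" using add.prems(2) by auto
  have "X ({#t#} + R2) - X ({#t#} + M'') \<in> (Imnr m n r :: 'a mpoly3 set)"
    by (rule mult_X_diff[OF tV IH])
  then have "X M2 - X (add_mset t M'') \<in> (Imnr m n r :: 'a mpoly3 set)" using M2eq by simp
  then show ?case using M1(1) M2(1) Imnr_trans by metis
qed


definition Lf :: "nat multiset \<times> nat multiset \<times> nat multiset \<Rightarrow> 'a::field mpoly3 \<Rightarrow> 'a" where
  "Lf s p = (\<Sum>a\<in>Poly_Mapping.keys p. if proj (toM a) = s then Poly_Mapping.lookup p a else 0)"

lemma Lf_add: "Lf s (p + q) = Lf s p + Lf s q"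
  unfolding Lf_def
  by (rule setsum_keys_plus_distrib[where f = "\<lambda>a v. if proj (toM a) = s then v else 0"]) auto

lemma Lf_zero: "Lf s 0 = 0"
  by (simp add: Lf_def)

lemma Lf_diff: "Lf s (p - q) = Lf s p - Lf s q"
  using Lf_add[of s "p - q" q] by simp

lemma Lf_sum: "Lf s (sum h F) = (\<Sum>g\<in>F. Lf s (h g))"
  by (induction F rule: infinite_finite_induct) (simp_all add: Lf_zero Lf_add)

lemma Lf_single: "Lf s (Poly_Mapping.single b v) = (if proj (toM b) = s then v else 0)"
  by (simp add: Lf_def)

lemma poly_expand: "p = (\<Sum>u\<in>Poly_Mapping.keys p. Poly_Mapping.single u (Poly_Mapping.lookup p u))"
proof (rule poly_mapping_eqI)
  fix k
  have "Poly_Mapping.lookup (\<Sum>u\<in>Poly_Mapping.keys p. Poly_Mapping.single u (Poly_Mapping.lookup p u)) k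
      = (\<Sum>u\<in>Poly_Mapping.keys p. (if u = k then Poly_Mapping.lookup p u else 0))"
    by (simp add: lookup_sum lookup_single when_def)
  also have "\<dots> = Poly_Mapping.lookup p k"
    by (simp add: in_keys_iff)
  finally show "Poly_Mapping.lookup p k = Poly_Mapping.lookup (\<Sum>u\<in>Poly_Mapping.keys p. Poly_Mapping.single u (Poly_Mapping.lookup p u)) k" ..
qed

lemma toM_plus_mon: "toM (u + mon A) = toM u + A"
proof -
  have "u + mon A = mon (toM u + A)" by (simp add: mon_add)
  then show ?thesis by simp
qed

lemma Lf_mult_X:
  "Lf s (c * X A) = (\<Sum>u\<in>Poly_Mapping.keys c. if proj (toM u + A) = s then Poly_Mapping.lookup c u else 0)"
proof -
  have "c * X A = (\<Sum>u\<in>Poly_Mapping.keys c. Poly_Mapping.single u (Poly_Mapping.lookup c u)) * X A"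
    by (subst poly_expand[of c]) (rule refl)
  also have "\<dots> = (\<Sum>u\<in>Poly_Mapping.keys c. Poly_Mapping.single (u + mon A) (Poly_Mapping.lookup c u))"
    by (simp add: sum_distrib_right X_def mult_single)
  finally show ?thesis by (simp add: Lf_sum Lf_single toM_plus_mon)
qed

lemma Lf_mult_X_eq: "proj A = proj B \<Longrightarrow> Lf s (c * X A) = Lf s (c * X B)"
  by (simp add: Lf_mult_X proj_plus)

lemma gen_form:
  assumes "g \<in> hminors m n r \<union> vminors m n r"
  shows "\<exists>A B. g = X A - X B \<and> proj A = proj B"
  using assms
proof
  assume "g \<in> hminors m n r"
  then obtain i i' j j' k k' where "g = var3 i j k * var3 i' j' k' - var3 i j' k' * var3 i' j k"
    unfolding hminors_def by blast
  then show ?thesis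
    by (intro exI[of _ "{#(i, j, k), (i', j', k')#}"] exI[of _ "{#(i, j', k'), (i', j, k)#}"])
       (simp add: X_pair proj_def add_mset_commute)
next
  assume "g \<in> vminors m n r"
  then obtain i i' j j' k k' where "g = var3 i j k * var3 i' j' k' - var3 i j' k * var3 i' j k'"
    unfolding vminors_def by blast
  then show ?thesis
    by (intro exI[of _ "{#(i, j, k), (i', j', k')#}"] exI[of _ "{#(i, j', k), (i', j, k')#}"])
       (simp add: X_pair proj_def add_mset_commute)
qed

lemma Lf_Imnr:
  assumes "p \<in> Imnr m n r"
  shows "Lf s p = 0"
proof -
  obtain F c where F: "p = (\<Sum>g\<in>F. c g * g)" "F \<subseteq> hminors m n r \<union> vminors m n r"
    using assms unfolding Imnr_def ideal_gen_def by blast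
  have "Lf s (c g * g) = 0" if gF: "g \<in> F" for g
  proof -
    obtain A B where AB: "g = X A - X B" "proj A = proj B" using gen_form[of g m n r] F(2) gF by blast
    then show ?thesis by (simp add: right_diff_distrib Lf_diff Lf_mult_X_eq[OF AB(2)])
  qed
  then show ?thesis using F(1) by (simp add: Lf_sum)
qed


abbreviation MS :: "nat \<Rightarrow> nat \<Rightarrow> nat \<Rightarrow> nat \<Rightarrow> (nat \<times> nat \<times> nat) multiset set" where
  "MS m n r d \<equiv> multisets_of_size (vars3 m n r) d"

lemma finite_vars3: "finite (vars3 m n r)"
proof (rule finite_subset)
  show "vars3 m n r \<subseteq> {1..m} \<times> {1..n} \<times> {1..r}" by (auto simp: vars3_def)
qed auto

lemma finite_MS: "finite (MS m n r d)"
  using finite_vars3 by blast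

lemma toM_MS_iff: "toM a \<in> MS m n r d \<longleftrightarrow>
   Poly_Mapping.keys a \<subseteq> vars3 m n r \<and> (\<Sum>v\<in>Poly_Mapping.keys a. Poly_Mapping.lookup a v) = d"
proof -
  have "set_mset (toM a) = Poly_Mapping.keys a" by (auto simp: count_toM in_keys_iff set_mset_def)
  moreover have "size (toM a) = (\<Sum>v\<in>Poly_Mapping.keys a. Poly_Mapping.lookup a v)"
    using deg_mon[of "toM a"] by simp
  ultimately show ?thesis by (simp add: multisets_of_size_def)
qed

lemma homog_iff: "p \<in> homog m n r d \<longleftrightarrow> (\<forall>a\<in>Poly_Mapping.keys p. toM a \<in> MS m n r d)"
  by (auto simp: homog_def ringR_def toM_MS_iff)

lemma X_homog: "M \<in> MS m n r d \<Longrightarrow> X M \<in> homog m n r d"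
  by (simp add: homog_iff keys_X)

lemma expand_homog:
  assumes p: "p \<in> homog m n r d"
  shows "p = (\<Sum>M\<in>MS m n r d. cscale (Poly_Mapping.lookup p (mon M)) (X M))"
proof (rule poly_mapping_eqI)
  fix k
  have "Poly_Mapping.lookup (\<Sum>M\<in>MS m n r d. cscale (Poly_Mapping.lookup p (mon M)) (X M)) k =
        (\<Sum>M\<in>MS m n r d. if M = toM k then Poly_Mapping.lookup p k else 0)"
    by (rule trans[OF lookup_sum], rule sum.cong) (auto simp: lookup_cscale lookup_X)
  also have "\<dots> = Poly_Mapping.lookup p k"
  proof (cases "toM k \<in> MS m n r d")
    case True then show ?thesis using sum.delta[OF finite_MS[of m n r d], of "toM k" "\<lambda>_. Poly_Mapping.lookup p k"] by simp
  next
    case False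
    then have "k \<notin> Poly_Mapping.keys p" using p by (auto simp: homog_iff)
    then have z: "Poly_Mapping.lookup p k = 0" by (simp add: in_keys_iff)
    show ?thesis unfolding z by simp
  qed
  finally show "Poly_Mapping.lookup p k = Poly_Mapping.lookup (\<Sum>M\<in>MS m n r d. cscale (Poly_Mapping.lookup p (mon M)) (X M)) k" ..
qed

lemma lookup_scale_sum:
  "Poly_Mapping.lookup (\<Sum>v\<in>t. cscale (u v) v) a = (\<Sum>v\<in>t. u v * Poly_Mapping.lookup v a)"
  by (simp add: lookup_sum lookup_cscale)

lemma dim_homog:
  "VS.dim (homog m n r d :: 'a::field mpoly3 set) = card (MS m n r d)"
proof -
  let ?B = "(X :: _ \<Rightarrow> 'a mpoly3) ` MS m n r d"
  have sub: "?B \<subseteq> homog m n r d" using X_homog by blast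
  have sp: "homog m n r d \<subseteq> VS.span ?B"
  proof
    fix p :: "'a mpoly3" assume p: "p \<in> homog m n r d"
    have "(\<Sum>M\<in>MS m n r d. cscale (Poly_Mapping.lookup p (mon M)) (X M)) \<in> VS.span ?B"
      by (intro VS.span_sum VS.span_scale VS.span_base) auto
    then show "p \<in> VS.span ?B" using expand_homog[OF p] by simp
  qed
  have ind: "VS.independent ?B"
    unfolding VS.dependent_explicit
  proof clarify
    fix t u v assume t: "finite t" "t \<subseteq> ?B" "(\<Sum>v\<in>t. cscale (u v) v) = 0" "v \<in> t" "u v \<noteq> 0"
    obtain M where M: "v = X M" using t by blast
    have "\<And>v'. v' \<in> t \<Longrightarrow> u v' * Poly_Mapping.lookup v' (mon M) = (if v' = v then u v else 0)"
    proof -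
      fix v' assume "v' \<in> t"
      then obtain M' where "v' = X M'" using t by blast
      then show "u v' * Poly_Mapping.lookup v' (mon M) = (if v' = v then u v else 0)"
        using M by (auto simp: lookup_X mon_inj X_inj)
    qed
    then have "Poly_Mapping.lookup (\<Sum>v\<in>t. cscale (u v) v) (mon M) = u v"
      using t(1,4) by (simp add: lookup_scale_sum)
    then show False using t(3,5) by simp
  qed
  have "card ?B = card (MS m n r d)"
    by (rule card_image) (auto intro: inj_onI simp: X_inj)
  then show ?thesis using VS.dim_unique[OF sub sp ind] by simp
qed


definition rep :: "nat \<Rightarrow> nat \<Rightarrow> nat \<Rightarrow> nat \<Rightarrow> nat multiset \<times> nat multiset \<times> nat multiset \<Rightarrow> (nat \<times> nat \<times> nat) multiset" where
  "rep m n r d s = (SOME M. M \<in> MS m n r d \<and> proj M = s)"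

lemma rep_props:
  assumes "M \<in> MS m n r d"
  shows "rep m n r d (proj M) \<in> MS m n r d" "proj (rep m n r d (proj M)) = proj M"
proof -
  have "\<exists>M'. M' \<in> MS m n r d \<and> proj M' = proj M" using assms by blast
  then have "rep m n r d (proj M) \<in> MS m n r d \<and> proj (rep m n r d (proj M)) = proj M"
    unfolding rep_def by (rule someI_ex)
  then show "rep m n r d (proj M) \<in> MS m n r d" "proj (rep m n r d (proj M)) = proj M" by auto
qed

lemma Lf_homog:
  assumes p: "p \<in> homog m n r d"
  shows "Lf s p = (\<Sum>M\<in>{M\<in>MS m n r d. proj M = s}. Poly_Mapping.lookup p (mon M))"
proof -
  have sub: "Poly_Mapping.keys p \<subseteq> mon ` MS m n r d"
  proof
    fix a assume "a \<in> Poly_Mapping.keys p"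
    then have "toM a \<in> MS m n r d" using p by (simp add: homog_iff)
    then show "a \<in> mon ` MS m n r d" by (metis image_eqI mon_toM)
  qed
  have "Lf s p = (\<Sum>a\<in>mon ` MS m n r d. if proj (toM a) = s then Poly_Mapping.lookup p a else 0)"
    unfolding Lf_def
    by (rule sum.mono_neutral_left) (auto simp: finite_MS sub in_keys_iff)
  also have "\<dots> = (\<Sum>M\<in>MS m n r d. if proj M = s then Poly_Mapping.lookup p (mon M) else 0)"
    by (subst sum.reindex) (auto intro: inj_onI simp: mon_inj)
  also have "\<dots> = (\<Sum>M\<in>{M\<in>MS m n r d. proj M = s}. Poly_Mapping.lookup p (mon M))"
    by (simp add: sum.inter_filter[OF finite_MS])
  finally show ?thesis .
qed

lemma diff_homog:
  assumes "M \<in> MS m n r d" "M' \<in> MS m n r d"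
  shows "X M - X M' \<in> homog m n r d"
proof -
  have "Poly_Mapping.keys (X M - X M' :: 'a::field mpoly3) \<subseteq> {mon M, mon M'}"
    using keys_diff[of "X M :: 'a mpoly3" "X M'"] by (simp add: keys_X insert_commute)
  then show ?thesis using assms by (auto simp: homog_iff)
qed

lemma dim_I_homog:
  "VS.dim (Imnr m n r \<inter> homog m n r d :: 'a::field mpoly3 set) =
     card (MS m n r d) - card (proj ` MS m n r d)"
proof -
  let ?MS = "MS m n r d"
  let ?rep = "rep m n r d"
  let ?NR = "{M\<in>?MS. ?rep (proj M) \<noteq> M}"
  let ?bv = "\<lambda>M. (X M - X (?rep (proj M)) :: 'a mpoly3)"
  let ?B = "?bv ` ?NR"
  have lk: "Poly_Mapping.lookup (?bv M') (mon M) = (if M' = M then 1 else 0)"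
    if "M \<in> ?NR" "M' \<in> ?MS" for M M'
  proof -
    have "?rep (proj M') \<noteq> M"
    proof
      assume h: "?rep (proj M') = M"
      then have "proj M = proj M'" using rep_props(2)[OF that(2)] by simp
      then show False using h that(1) by simp
    qed
    then show ?thesis by (auto simp: lookup_X mon_inj lookup_minus)
  qed
  have sub: "?B \<subseteq> Imnr m n r \<inter> homog m n r d"
  proof
    fix v assume "v \<in> ?B"
    then obtain M where M: "M \<in> ?MS" "v = ?bv M" by blast
    have V: "set_mset M \<subseteq> vars3 m n r" "set_mset (?rep (proj M)) \<subseteq> vars3 m n r"
      using M(1) rep_props(1)[OF M(1)] by (auto simp: multisets_of_size_def)
    have "v \<in> Imnr m n r" using cong_proj[OF V] rep_props(2)[OF M(1)] M(2) by simp
    moreover have "v \<in> homog m n r d" using diff_homog[OF M(1) rep_props(1)[OF M(1)]] M(2) by simp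
    ultimately show "v \<in> Imnr m n r \<inter> homog m n r d" by blast
  qed
  have ind: "VS.independent ?B"
    unfolding VS.dependent_explicit
  proof clarify
    fix t u v assume t: "finite t" "t \<subseteq> ?B" "(\<Sum>v\<in>t. cscale (u v) v) = 0" "v \<in> t" "u v \<noteq> 0"
    obtain M where M: "M \<in> ?NR" "v = ?bv M" using t by blast
    have "\<And>v'. v' \<in> t \<Longrightarrow> u v' * Poly_Mapping.lookup v' (mon M) = (if v' = v then u v else 0)"
    proof -
      fix v' assume "v' \<in> t"
      then obtain M' where M': "M' \<in> ?NR" "v' = ?bv M'" using t by blast
      show "u v' * Poly_Mapping.lookup v' (mon M) = (if v' = v then u v else 0)"
      proof (cases "M' = M")
        case True then show ?thesis using M M' lk[OF M(1), of M'] by simp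
      next
        case False
        then have "Poly_Mapping.lookup v' (mon M) = 0" using lk[OF M(1), of M'] M' by simp
        moreover have "v' \<noteq> v" using lk[OF M(1), of M'] lk[OF M(1), of M] M M' False by auto
        ultimately show ?thesis by simp
      qed
    qed
    then have "Poly_Mapping.lookup (\<Sum>v\<in>t. cscale (u v) v) (mon M) = u v"
      using t(1,4) by (simp add: lookup_scale_sum)
    then show False using t(3,5) by simp
  qed
  have sp: "Imnr m n r \<inter> homog m n r d \<subseteq> VS.span ?B"
  proof
    fix p :: "'a mpoly3" assume pI: "p \<in> Imnr m n r \<inter> homog m n r d"
    let ?cf = "\<lambda>M. Poly_Mapping.lookup p (mon M)"
    have "p = (\<Sum>M\<in>?MS. cscale (?cf M) (X M))" using expand_homog pI by blast
    also have "\<dots> = (\<Sum>M\<in>?MS. cscale (?cf M) (?bv M)) + (\<Sum>M\<in>?MS. cscale (?cf M) (X (?rep (proj M))))"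
      by (simp add: VS.scale_right_diff_distrib sum.distrib[symmetric])
    also have "(\<Sum>M\<in>?MS. cscale (?cf M) (X (?rep (proj M)))) = 0"
    proof -
      have "(\<Sum>M\<in>?MS. cscale (?cf M) (X (?rep (proj M)))) =
          (\<Sum>s\<in>proj ` ?MS. \<Sum>M\<in>{M\<in>?MS. proj M = s}. cscale (?cf M) (X (?rep (proj M))))"
        by (rule sum.image_gen[OF finite_MS])
      also have "\<dots> = (\<Sum>s\<in>proj ` ?MS. cscale (Lf s p) (X (?rep s)))"
      proof (rule sum.cong[OF refl])
        fix s assume "s \<in> proj ` ?MS"
        have "(\<Sum>M\<in>{M\<in>?MS. proj M = s}. cscale (?cf M) (X (?rep (proj M)))) =
              (\<Sum>M\<in>{M\<in>?MS. proj M = s}. cscale (?cf M) (X (?rep s)))"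
          by (rule sum.cong) auto
        also have "\<dots> = cscale (\<Sum>M\<in>{M\<in>?MS. proj M = s}. ?cf M) (X (?rep s))"
          by (simp add: VS.scale_sum_left)
        also have "\<dots> = cscale (Lf s p) (X (?rep s))"
          using Lf_homog[of p m n r d s] pI by simp
        finally show "(\<Sum>M\<in>{M\<in>?MS. proj M = s}. cscale (?cf M) (X (?rep (proj M)))) = cscale (Lf s p) (X (?rep s))" .
      qed
      also have "\<dots> = 0" using Lf_Imnr[of p m n r] pI by simp
      finally show ?thesis .
    qed
    finally have pe: "p = (\<Sum>M\<in>?MS. cscale (?cf M) (?bv M))" by simp
    have "(\<Sum>M\<in>?MS. cscale (?cf M) (?bv M)) \<in> VS.span ?B"
    proof (intro VS.span_sum VS.span_scale)
      fix M assume M: "M \<in> ?MS"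
      show "?bv M \<in> VS.span ?B"
      proof (cases "?rep (proj M) = M")
        case True then show ?thesis by (simp add: VS.span_zero)
      next
        case False then show ?thesis using M by (intro VS.span_base) blast
      qed
    qed
    then show "p \<in> VS.span ?B" using pe by simp
  qed
  have cB: "card ?B = card ?NR"
  proof (rule card_image, rule inj_onI)
    fix M M' assume M: "M \<in> ?NR" "M' \<in> ?NR" "?bv M = ?bv M'"
    have "Poly_Mapping.lookup (?bv M') (mon M) = 1" using M(3) lk[OF M(1), of M] M(1) by simp
    then show "M = M'" using lk[OF M(1), of M'] M(2) by (auto split: if_splits)
  qed
  have NReq: "?NR = ?MS - ?rep ` proj ` ?MS"
  proof
    show "?NR \<subseteq> ?MS - ?rep ` proj ` ?MS"
    proof
      fix M assume M: "M \<in> ?NR"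
      have "M \<notin> ?rep ` proj ` ?MS"
      proof
        assume "M \<in> ?rep ` proj ` ?MS"
        then obtain M' where M': "M' \<in> ?MS" "M = ?rep (proj M')" by blast
        then have "proj M = proj M'" using rep_props(2)[OF M'(1)] by simp
        then show False using M M' by simp
      qed
      then show "M \<in> ?MS - ?rep ` proj ` ?MS" using M by blast
    qed
    show "?MS - ?rep ` proj ` ?MS \<subseteq> ?NR"
    proof
      fix M assume M: "M \<in> ?MS - ?rep ` proj ` ?MS"
      have "?rep (proj M) \<noteq> M"
      proof
        assume "?rep (proj M) = M"
        then have "M \<in> ?rep ` proj ` ?MS" using M by (metis DiffD1 image_eqI)
        then show False using M by blast
      qed
      then show "M \<in> ?NR" using M by blast
    qed
  qed
  have c2: "card (?MS - ?rep ` proj ` ?MS) = card ?MS - card (?rep ` proj ` ?MS)"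
    by (rule card_Diff_subset) (auto intro: finite_subset[OF _ finite_MS] simp: rep_props(1))
  have c3: "card (?rep ` proj ` ?MS) = card (proj ` ?MS)"
  proof (rule card_image, rule inj_onI)
    fix s s' assume "s \<in> proj ` ?MS" "s' \<in> proj ` ?MS" "?rep s = ?rep s'"
    then show "s = s'" using rep_props(2) by (metis imageE)
  qed
  show ?thesis using VS.dim_unique[OF sub sp ind] cB NReq c2 c3 by simp
qed


lemma proj_MS:
  "proj ` MS m n r d = multisets_of_size {1..m} d \<times> multisets_of_size {1..n} d \<times> multisets_of_size {1..r} d"
proof
  show "proj ` MS m n r d \<subseteq> multisets_of_size {1..m} d \<times> multisets_of_size {1..n} d \<times> multisets_of_size {1..r} d"
  proof (rule image_subsetI)
    fix M assume M: "M \<in> MS m n r d"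
    then have "\<forall>x\<in>#M. x \<in> vars3 m n r" "size M = d" by (auto simp: multisets_of_size_def)
    then show "proj M \<in> multisets_of_size {1..m} d \<times> multisets_of_size {1..n} d \<times> multisets_of_size {1..r} d"
      by (auto simp: proj_def multisets_of_size_def vars3_def)
  qed
  show "multisets_of_size {1..m} d \<times> multisets_of_size {1..n} d \<times> multisets_of_size {1..r} d \<subseteq> proj ` MS m n r d"
  proof clarify
    fix A B C assume ABC: "A \<in> multisets_of_size {1..m} d" "B \<in> multisets_of_size {1..n} d" "C \<in> multisets_of_size {1..r} d"
    define xs where "xs = sorted_list_of_multiset A"
    define ys where "ys = sorted_list_of_multiset B"
    define zs where "zs = sorted_list_of_multiset C"
    have mx: "mset xs = A" "mset ys = B" "mset zs = C" by (simp_all add: xs_def ys_def zs_def)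
    have lx: "length xs = d" "length ys = d" "length zs = d"
    proof -
      have "size A = d" "size B = d" "size C = d" using ABC by (simp_all add: multisets_of_size_def)
      then show "length xs = d" "length ys = d" "length zs = d" using mx by (metis size_mset)+
    qed
    define M where "M = mset (zip xs (zip ys zs))"
    have "image_mset fst M = mset (map fst (zip xs (zip ys zs)))" by (simp add: M_def)
    then have "image_mset fst M = A" using lx mx by simp
    moreover have "image_mset (fst \<circ> snd) M = B"
    proof -
      have "image_mset (fst \<circ> snd) M = mset (map fst (map snd (zip xs (zip ys zs))))"
        by (simp add: M_def)
      then show ?thesis using lx mx by simp
    qed
    moreover have "image_mset (snd \<circ> snd) M = C"
    proof -
      have "image_mset (snd \<circ> snd) M = mset (map snd (map snd (zip xs (zip ys zs))))"
        by (simp add: M_def)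
      then show ?thesis using lx mx by simp
    qed
    ultimately have "proj M = (A, B, C)" by (simp add: proj_def)
    moreover have "M \<in> MS m n r d"
    proof -
      have "size M = d" using lx by (simp add: M_def)
      moreover have "set_mset M \<subseteq> vars3 m n r"
      proof
        fix t assume "t \<in># M"
        then obtain x y z where t: "t = (x, y, z)" "(x, (y, z)) \<in> set (zip xs (zip ys zs))"
          by (cases t) (auto simp: M_def)
        then have "x \<in> set xs" "(y, z) \<in> set (zip ys zs)" by (auto dest: set_zip_leftD set_zip_rightD)
        then have "x \<in> set xs" "y \<in> set ys" "z \<in> set zs" by (auto dest: set_zip_leftD set_zip_rightD)
        then have "x \<in># A" "y \<in># B" "z \<in># C" using mx by auto
        then show "t \<in> vars3 m n r" using ABC t(1) by (auto simp: multisets_of_size_def vars3_def)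
      qed
      ultimately show ?thesis by (simp add: multisets_of_size_def)
    qed
    ultimately show "(A, B, C) \<in> proj ` MS m n r d" by (metis image_eqI)
  qed
qed

lemma hilb_fun_eq:
  "hilb_fun (TYPE('a::field)) m n r d =
     ((m + d - 1) choose d) * ((n + d - 1) choose d) * ((r + d - 1) choose d)"
proof -
  have "hilb_fun (TYPE('a)) m n r d =
      VS.dim (homog m n r d :: 'a mpoly3 set) - VS.dim (Imnr m n r \<inter> homog m n r d :: 'a mpoly3 set)"
    by (simp add: hilb_fun_def)
  also have "\<dots> = card (MS m n r d) - (card (MS m n r d) - card (proj ` MS m n r d))"
    by (simp add: dim_homog dim_I_homog)
  also have "\<dots> = card (proj ` MS m n r d)"
    using card_image_le[OF finite_MS, of proj m n r d] by simp
  also have "\<dots> = ((m + d - 1) choose d) * ((n + d - 1) choose d) * ((r + d - 1) choose d)"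
    by (simp add: proj_MS card_cartesian_product card_multisets_of_size)
  finally show ?thesis .
qed


lemma prod3: "(\<Prod>c<(3::nat). f c) = f 0 * f 1 * (f 2 :: nat)"
proof -
  have "{..<(3::nat)} = {0, 1, 2}" by auto
  then show ?thesis by (simp add: mult.assoc)
qed

lemma choose_swap: "1 \<le> m \<Longrightarrow> (m + d - 1) choose d = (d + (m - 1)) choose (m - 1)"
proof -
  assume m: "1 \<le> m"
  have "(d + (m - 1)) choose d = (d + (m - 1)) choose (d + (m - 1) - d)"
    by (rule binomial_symmetric) simp
  moreover have "m + d - 1 = d + (m - 1)" using m by simp
  ultimately show ?thesis by simp
qed

theorem corollary4p5:
  fixes m n r :: nat and \<phi> :: "nat \<Rightarrow> nat \<times> nat"
  assumes "m \<ge> 1" and "n \<ge> 1" and "r \<ge> 1"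
    and "natural_labeling m n r \<phi>"
  shows "\<exists>D::nat. hilb_series (TYPE('a::field)) m n r * (1 - fps_X) ^ D
           = fps_of_poly (\<Sum>w\<in>lin_ext m n r \<phi>. monom (1::int) (des (m + n + r - 3) w))"
proof -
  define N where "N = m + n + r - 3"
  define le where "le = (\<lambda>i j. chains_le (\<phi> i) (\<phi> j))"
  have nat: "\<forall>i\<in>{1..N}. \<forall>j\<in>{1..N}. le i j \<longrightarrow> i \<le> j"
    using assms(4) unfolding natural_labeling_def N_def le_def by blast
  have LEeq: "lin_ext m n r \<phi> = LE N le"
    unfolding lin_ext_def LE_def N_def le_def ..
  have desle: "des N w \<le> N" if "w \<in> LE N le" for w
  proof -
    have "des N w = card (DesSet N w)" by (rule des_eq)
    also have "\<dots> \<le> card {1..<N}" by (rule card_mono) (use DesSet_sub[OF that] in auto)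
    finally show ?thesis by simp
  qed
  have coef: "int (hilb_fun (TYPE('a)) m n r d) = (\<Sum>w\<in>LE N le. int ((d + N - des N w) choose N))" for d
  proof -
    have "hilb_fun (TYPE('a)) m n r d = ((m + d - 1) choose d) * ((n + d - 1) choose d) * ((r + d - 1) choose d)"
      by (rule hilb_fun_eq)
    also have "\<dots> = ((d + (m - 1)) choose (m - 1)) * ((d + (n - 1)) choose (n - 1)) * ((d + (r - 1)) choose (r - 1))"
      using choose_swap[OF assms(1), of d] choose_swap[OF assms(2), of d] choose_swap[OF assms(3), of d]
      by (simp only:)
    also have "\<dots> = (\<Prod>c<3. (d + chain_sizes m n r c) choose chain_sizes m n r c)"
      by (simp only: prod3) (simp add: chain_sizes_def)
    also have "\<dots> = card (OP N le d)"
      using card_OP_chains[OF assms(4), of d] unfolding N_def le_def by simp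
    also have "\<dots> = (\<Sum>w\<in>LE N le. (d + N - des N w) choose N)"
      by (rule card_OP[OF nat])
    finally show ?thesis by simp
  qed
  have HS: "hilb_series (TYPE('a)) m n r = (\<Sum>w\<in>LE N le. Abs_fps (\<lambda>d. int ((d + N - des N w) choose N)))"
    by (rule fps_ext) (simp add: hilb_series_def fps_sum_nth coef)
  have "hilb_series (TYPE('a)) m n r * (1 - fps_X) ^ Suc N
      = (\<Sum>w\<in>LE N le. Abs_fps (\<lambda>d. int ((d + N - des N w) choose N)) * (1 - fps_X) ^ Suc N)"
    by (simp add: HS sum_distrib_right)
  also have "\<dots> = (\<Sum>w\<in>LE N le. fps_X ^ des N w)"
    by (rule sum.cong[OF refl]) (rule fps_binom_shift[OF desle])
  also have "\<dots> = fps_of_poly (\<Sum>w\<in>lin_ext m n r \<phi>. monom (1::int) (des (m + n + r - 3) w))"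
    by (simp add: LEeq fps_of_poly_sum fps_of_poly_monom' N_def)
  finally show ?thesis by blast
qed

end
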